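(* Consider the setting described in the context, with $E=1$ local update, and suppose Assumptions A1 and A2 hold and $\mathcal{A}$ is symmetric and satisfies $\mathcal{A}\mathcal{P}_{\mathcal{U}}=\mathcal{P}_{\mathcal{U}}$, $\mathcal{P}_{\mathcal{U}}\mathcal{A}=\mathcal{P}_{\mathcal{U}}$ and $\rho(\mathcal{P}_{\mathcal{U}}-\mathcal{A})<1$. Then there exists $\bar\mu>0$ such that for every step-size $0<\mu<\bar\mu$ the iterates of the exact subspace diffusion algorithm are mean-square stable and $$\limsup_{i\to\infty}\mathbb{E}\,\|\mathcal{w}^\star-\boldsymbol{\mathcal{w}}_i\|^2 = O(\mu),$$ i.e. $\limsup_{\mu\to 0}\frac{1}{\mu}\limsup_{i\to\infty}\mathbb{E}\|\mathcal{w}^\star-\boldsymbol{\mathcal{w}}_i\|^2<\infty$.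
   Context: Setup. There are $K$ agents; agent $k$ has a risk $J_k:\mathbb{R}^M\to\mathbb{R}$. For $w_1,\dots,w_K\in\mathbb{R}^M$ write $\mathcal{w}=\mathrm{col}\{w_k\}\in\mathbb{R}^{KM}$ (vertical stacking) and $\nabla\mathcal{J}(\mathcal{w})=\mathrm{col}\{\nabla J_k(w_k)\}$. Let $\mathcal{U}\in\mathbb{R}^{KM\times P}$ have full column rank, $\mathcal{P}_{\mathcal{U}}=\mathcal{U}(\mathcal{U}^{\mathsf T}\mathcal{U})^{-1}\mathcal{U}^{\mathsf T}$, and $\mathcal{w}^\star=\mathrm{col}\{w_k^\star\}=\arg\min_{\mathcal{w}\in\mathcal{R}(\mathcal{U})}\sum_{k=1}^K J_k(w_k)$. Let $\mathcal{A}\in\mathbb{R}^{KM\times KM}$ be symmetric with $\mathcal{A}\mathcal{P}_{\mathcal{U}}=\mathcal{P}_{\mathcal{U}}$, $\mathcal{P}_{\mathcal{U}}\mathcal{A}=\mathcal{P}_{\mathcal{U}}$, $\rho(\mathcal{P}_{\mathcal{U}}-\mathcal{A})<1$ ($\rho$ = spectral radius). Set $\overline{\mathcal{A}}=\frac12(I_{KM}+\mathcal{A})$. Exact subspace diffusion with $E=1$ (network form): given step-size $\mu>0$ and arbitrary initial $\boldsymbol{\mathcal{w}}_0$, set $\boldsymbol{\psi}_0=\boldsymbol{\mathcal{w}}_0$ and for $i\ge1$: $\boldsymbol{\psi}_i=\boldsymbol{\mathcal{w}}_{i-1}-\mu\,\widehat{\nabla\mathcal{J}}(\boldsymbol{\mathcal{w}}_{i-1})$,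 $\boldsymbol{\phi}_i=\boldsymbol{\mathcal{w}}_{i-1}+\boldsymbol{\psi}_i-\boldsymbol{\psi}_{i-1}$, $\boldsymbol{\mathcal{w}}_i=\overline{\mathcal{A}}\boldsymbol{\phi}_i$, where $\widehat{\nabla\mathcal{J}}(\boldsymbol{\mathcal{w}}_{i-1})=\mathrm{col}\{\widehat{\nabla J}_k(\boldsymbol{w}_{k,i-1})\}$ is a random (stochastic) gradient approximation, and $\boldsymbol{w}_{k,i}$ is the $k$-th $M$-block of $\boldsymbol{\mathcal{w}}_i$. Assumption A1: each $J_k$ is $\nu_k$-strongly convex with $\delta_k$-Lipschitz gradient: $(\nabla J_k(x)-\nabla J_k(y))^{\mathsf T}(x-y)\ge\nu_k\|x-y\|^2$ and $\|\nabla J_k(x)-\nabla J_k(y)\|\le\delta_k\|x-y\|$ for all $x,y$, with $0<\nu_k<\delta_k$. Assumption A2: the gradient noise $\boldsymbol{s}_{k,i}(\boldsymbol{w}_{k,i-1})=\widehat{\nabla J}_k(\boldsymbol{w}_{k,i-1})-\nabla J_k(\boldsymbol{w}_{k,i-1})$ satisfies, conditionally on the past iterates: $\mathbb{E}\{\boldsymbol{s}_{k,i}\mid\boldsymbol{w}_{k,i-1}\}=0$; $\mathbb{E}\{\|\boldsymbol{s}_{k,i}\|^2\mid\boldsymbol{w}_{k,i-1}\}\le\beta_k^2\|w_k^\star-\boldsymbol{w}_{k,i-1}\|^2+\sigma_k^2$ for constants $\beta_k,\sigma_k\ge0$; and for $k\ne\ell$, $\mathbb{E}\{\boldsymbol{s}_{k,i}\boldsymbol{s}_{\ell,i}^{\mathsf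 T}\mid\boldsymbol{w}_{k,i-1},\boldsymbol{w}_{\ell,i-1}\}=0$. *)

theory Defs
  imports "HOL-Probability.Probability"
begin

text \<open>Network vectors in R^{KM} are indexed by pairs (agent k, coordinate j).
  The k-th M-block of a network vector.\<close>
definition blk :: "real^('k::finite \<times> 'm::finite) \<Rightarrow> 'k \<Rightarrow> real^'m" where
  "blk w k = (\<chi> j. w $ (k, j))"

definition netgrad :: "('k::finite \<Rightarrow> real^'m::finite \<Rightarrow> real^'m) \<Rightarrow> real^('k \<times> 'm) \<Rightarrow> real^('k \<times> 'm)" where
  "netgrad g w = (\<chi> kj. g (fst kj) (blk w (fst kj)) $ snd kj)"

definition proj_range :: "real^'p::finite^'n::finite \<Rightarrow> real^'n^'n" where
  "proj_range U = U ** matrix_inv (transpose U ** U) ** transpose U"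

definition complexify :: "real^'n::finite^'n \<Rightarrow> complex^'n^'n" where
  "complexify B = (\<chi> i j. complex_of_real (B $ i $ j))"

definition spec_radius :: "real^'n::finite^'n \<Rightarrow> real" where
  "spec_radius B = Max {cmod l | l. det (mat l - complexify B) = 0}"

end

theory Submission
  imports Defs "HOL-Computational_Algebra.Polynomial"
begin


definition dsym :: "real^'n::finite^'n \<Rightarrow> bool" where
  "dsym M \<longleftrightarrow> (\<forall>a b. (M *v a) \<bullet> b = a \<bullet> (M *v b))"

lemma transpose_dot: "(transpose U *v a) \<bullet> b = a \<bullet> ((U::real^'p::finite^'n::finite) *v b)"
  by (simp add: dot_lmul_matrix)

lemma dsym_transpose: "transpose (B::real^'n::finite^'n) = B \<Longrightarrow> dsym B"
  unfolding dsym_def by (metis transpose_dot)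

lemma inj_surj_mat: "inj ((*v) (M::real^'n::finite^'n)) \<Longrightarrow> surj ((*v) M)"
  by (simp add: linear_injective_imp_surjective matrix_vector_mul_linear)

lemma inj_invertible: "inj ((*v) (M::real^'n::finite^'n)) \<Longrightarrow> invertible M"
  using invertible_left_inverse matrix_left_invertible_injective by blast

lemma matrix_inv_props:
  assumes "invertible (M::real^'n::finite^'n)"
  shows "M ** matrix_inv M = mat 1" "matrix_inv M ** M = mat 1"
proof -
  have "\<exists>A'. M ** A' = mat 1 \<and> A' ** M = mat 1" using assms invertible_def by blast
  then have "M ** matrix_inv M = mat 1 \<and> matrix_inv M ** M = mat 1"
    unfolding matrix_inv_def by (rule someI_ex)
  then show "M ** matrix_inv M = mat 1" "matrix_inv M ** M = mat 1" by auto
qed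

lemma matrix_inv_vec:
  assumes "invertible (M::real^'n::finite^'n)"
  shows "M *v (matrix_inv M *v x) = x" "matrix_inv M *v (M *v x) = x"
  using matrix_inv_props[OF assms] by (simp_all add: matrix_vector_mul_assoc)


lemma mat_vec: "mat k *v x = k *s (x::'a::comm_semiring_1 ^ 'n::finite)"
  apply (vector matrix_vector_mult_def mat_def)
  apply (simp add: if_distrib if_distribR cong del: if_weak_cong)
  done

lemma det_poly:
  fixes C :: "complex^'n::finite^'n"
  shows "\<exists>p. \<forall>l. det (mat l - C) = poly p l"
proof -
  define q where "q i j = [: - C$i$j, (if i = j then 1 else 0) :]" for i j
  define p where "p = (\<Sum>\<pi>\<in>{\<pi>. \<pi> permutes (UNIV::'n set)}. [:of_int (sign \<pi>):] * (\<Prod>i\<in>UNIV. q i (\<pi> i)))"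
  have "det (mat l - C) = poly p l" for l
    unfolding det_def p_def poly_sum poly_mult poly_prod
    by (intro sum.cong refl arg_cong2[where f="(*)"] prod.cong) (auto simp: q_def mat_def)
  then show ?thesis by blast
qed

lemma det_nonzero_exists:
  fixes C :: "complex^'n::finite^'n"
  shows "\<exists>l. det (mat l - C) \<noteq> 0"
proof -
  define S where "S = (\<Sum>i\<in>UNIV. \<Sum>j\<in>UNIV. cmod (C$i$j))"
  have S0: "S \<ge> 0" unfolding S_def by (intro sum_nonneg) auto
  define l where "l = complex_of_real (1 + S)"
  have inj: "x = 0" if hx: "(mat l - C) *v x = 0" for x
  proof (rule ccontr)
    assume "x \<noteq> 0"
    define m where "m = Max (range (\<lambda>i. cmod (x$i)))"
    have "m \<in> range (\<lambda>i. cmod (x$i))" unfolding m_def by (rule Max_in) auto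
    then obtain i0 where i0: "cmod (x$i0) = m" by auto
    have mge: "cmod (x$j) \<le> m" for j unfolding m_def by (intro Max_ge) auto
    have "m > 0"
    proof (rule ccontr)
      assume "\<not> m > 0"
      then have "x$j = 0" for j using mge[of j] by (smt (verit) norm_ge_zero norm_le_zero_iff)
      then show False using \<open>x \<noteq> 0\<close> by (auto simp: vec_eq_iff)
    qed
    have row: "((mat l - C) *v x)$i0 = l * x$i0 - (\<Sum>j\<in>UNIV. C$i0$j * x$j)"
    proof -
      have "(mat l - C) *v x = l *s x - C *v x" by (simp add: matrix_vector_mult_diff_rdistrib mat_vec)
      then show ?thesis by (simp add: matrix_vector_mult_def)
    qed
    then have eq: "l * x$i0 = (\<Sum>j\<in>UNIV. C$i0$j * x$j)" using hx by simp
    have c1: "cmod (l * x$i0) = (1 + S) * m"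
    proof -
      have "cmod l = 1 + S" unfolding l_def norm_of_real using S0 by linarith
      then show ?thesis using i0 norm_mult[of l "x$i0"] by metis
    qed
    have c2: "cmod (\<Sum>j\<in>UNIV. C$i0$j * x$j) \<le> (\<Sum>j\<in>UNIV. cmod (C$i0$j) * m)"
      by (rule order.trans[OF norm_sum]) (intro sum_mono, auto simp: norm_mult intro!: mult_left_mono mge)
    have c3: "(\<Sum>j\<in>UNIV. cmod (C$i0$j) * m) = (\<Sum>j\<in>UNIV. cmod (C$i0$j)) * m" by (simp add: sum_distrib_right)
    have c4: "(\<Sum>j\<in>UNIV. cmod (C$i0$j)) \<le> S"
      unfolding S_def by (rule member_le_sum) (auto intro: sum_nonneg)
    have "(1 + S) * m \<le> S * m"
    proof -
      have c0: "cmod (l * x$i0) = cmod (\<Sum>j\<in>UNIV. C$i0$j * x$j)" by (simp only: eq)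
      have "(\<Sum>j\<in>UNIV. cmod (C$i0$j)) * m \<le> S * m" using mult_right_mono[OF c4, of m] \<open>m > 0\<close> by simp
      then show ?thesis using c0 c1 c2 c3 by linarith
    qed
    then show False using \<open>m > 0\<close> by (simp add: algebra_simps)
  qed
  have "invertible (mat l - C)"
    using inj matrix_left_invertible_ker invertible_left_inverse by blast
  then show ?thesis using invertible_det_nz by blast
qed

lemma finite_eig:
  fixes C :: "complex^'n::finite^'n"
  shows "finite {cmod l | l. det (mat l - C) = 0}"
proof -
  obtain p where p: "\<And>l. det (mat l - C) = poly p l" using det_poly by blast
  obtain l0 where "det (mat l0 - C) \<noteq> 0" using det_nonzero_exists by blast
  then have "p \<noteq> 0" using p by auto
  then have "finite {l. poly p l = 0}" by (rule poly_roots_finite)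
  then have "finite (cmod ` {l. det (mat l - C) = 0})" using p by simp
  moreover have "{cmod l | l. det (mat l - C) = 0} = cmod ` {l. det (mat l - C) = 0}" by auto
  ultimately show ?thesis by simp
qed

lemma det_complexify: "det (complexify B) = complex_of_real (det (B::real^'n::finite^'n))"
  unfolding det_def complexify_def by (simp add: of_real_sum of_real_mult of_real_prod)

lemma complexify_diff: "mat (complex_of_real m) - complexify B = complexify (mat m - B)"
  unfolding complexify_def mat_def by (simp add: vec_eq_iff)


lemma spec_bound:
  fixes B :: "real^'n::finite^'n"
  assumes sym: "dsym B" and rho: "spec_radius B < 1"
  shows "\<exists>r\<ge>0. r < 1 \<and> (\<forall>v. norm (B *v v) \<le> r * norm v)"
proof -
  have cont: "continuous_on (sphere 0 1) (\<lambda>v. norm (B *v v))"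
    by (intro continuous_intros linear_continuous_on matrix_vector_mul_bounded_linear)
  obtain x where xs: "x \<in> sphere (0::real^'n) 1" and xmax: "\<forall>y\<in>sphere 0 1. norm (B *v y) \<le> norm (B *v x)"
    using continuous_attains_sup[OF compact_sphere _ cont] by auto
  define lam where "lam = norm (B *v x)"
  have nx: "norm x = 1" using xs by simp
  have bound: "norm (B *v v) \<le> lam * norm v" for v
  proof (cases "v = 0")
    case True then show ?thesis by simp
  next
    case False
    define y where "y = (1 / norm v) *\<^sub>R v"
    have "y \<in> sphere 0 1" using False by (simp add: y_def)
    then have "norm (B *v y) \<le> lam" using xmax lam_def by auto
    moreover have "B *v y = (1 / norm v) *\<^sub>R (B *v v)" by (simp add: y_def matrix_vector_mult_scaleR)
    ultimately have "norm (B *v v) / norm v \<le> lam" using False by simp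
    then show ?thesis using False by (simp add: divide_le_eq mult.commute)
  qed
  have lam0: "lam \<ge> 0" by (simp add: lam_def)
  show ?thesis
  proof (cases "lam < 1")
    case True then show ?thesis using bound lam0 by blast
  next
    case False
    then have lampos: "lam > 0" by simp
    define b where "b = B *v x"
    define c where "c = B *v b"
    have nb: "norm b = lam" by (simp add: b_def lam_def)
    have nc: "norm c \<le> lam * lam" using bound[of b] nb by (simp add: c_def)
    have cx: "c \<bullet> x = lam * lam"
    proof -
      have "c \<bullet> x = b \<bullet> b" using sym unfolding dsym_def c_def b_def by blast
      also have "\<dots> = lam * lam" using nb by (simp add: power2_eq_square[symmetric] power2_norm_eq_inner[symmetric])
      finally show ?thesis .
    qed
    have "(norm (c - (lam*lam) *\<^sub>R x))\<^sup>2 = (c - (lam*lam) *\<^sub>R x) \<bullet> (c - (lam*lam) *\<^sub>R x)"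
      by (rule power2_norm_eq_inner)
    also have "\<dots> = c \<bullet> c - 2 * (lam*lam) * (c \<bullet> x) + (lam*lam)\<^sup>2 * (x \<bullet> x)"
      by (simp add: inner_diff_left inner_diff_right inner_commute algebra_simps power2_eq_square)
    also have "\<dots> = (norm c)\<^sup>2 - 2 * (lam*lam) * (c \<bullet> x) + (lam*lam)\<^sup>2 * (norm x)\<^sup>2"
      by (simp add: power2_norm_eq_inner)
    also have "\<dots> \<le> 0"
    proof -
      have "(norm c)\<^sup>2 \<le> (lam*lam)\<^sup>2" using nc by (simp add: power_mono)
      then show ?thesis using cx nx by (simp add: power2_eq_square)
    qed
    finally have ceq: "c = (lam*lam) *\<^sub>R x" by simp
    obtain mu v where v0: "v \<noteq> 0" and ev: "B *v v = mu *\<^sub>R v" and amu: "\<bar>mu\<bar> = lam"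
    proof (cases "b + lam *\<^sub>R x = 0")
      case True
      then have "B *v x = (- lam) *\<^sub>R x" unfolding b_def by (simp add: eq_neg_iff_add_eq_0 algebra_simps)
      moreover have "x \<noteq> 0" using nx by auto
      ultimately show ?thesis using that[of x "- lam"] lam0 by simp
    next
      case False
      have "B *v (b + lam *\<^sub>R x) = c + lam *\<^sub>R b"
        by (simp add: matrix_vector_right_distrib matrix_vector_mult_scaleR c_def b_def)
      also have "\<dots> = lam *\<^sub>R (b + lam *\<^sub>R x)" using ceq by (simp add: algebra_simps)
      finally show ?thesis using that[of "b + lam *\<^sub>R x" lam] False lam0 by simp
    qed
    have "(mat mu - B) *v v = 0"
      using ev by (simp add: matrix_vector_mult_diff_rdistrib mat_vec scalar_mult_eq_scaleR)
    then have "\<not> inj ((*v) (mat mu - B))" using v0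
      by (metis inj_eq matrix_vector_mult_0_right)
    then have "\<not> invertible (mat mu - B)" using inj_matrix_vector_mult by blast
    then have "det (mat mu - B) = 0" using invertible_det_nz by blast
    then have "det (mat (complex_of_real mu) - complexify B) = 0"
      by (simp add: complexify_diff det_complexify)
    then have "lam \<in> {cmod l | l. det (mat l - complexify B) = 0}"
      using amu by (intro CollectI exI[of _ "complex_of_real mu"]) auto
    then have "lam \<le> spec_radius B" unfolding spec_radius_def
      by (intro Max_ge finite_eig)
    then show ?thesis using rho False by simp
  qed
qed


lemma Ab_vec: "((1/2) *\<^sub>R (mat 1 + A)) *v y = (1/2) *\<^sub>R (y + A *v (y::real^'n::finite))"
  by (simp add: scaleR_matrix_vector_assoc[symmetric] matrix_vector_mult_add_rdistrib)

lemma norm_sq_diff: "(norm (a - b))\<^sup>2 = (norm a)\<^sup>2 - 2 * (a \<bullet> b) + (norm (b::'a::real_inner))\<^sup>2"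
  by (simp add: power2_norm_eq_inner inner_diff_left inner_diff_right inner_commute)

lemma norm_sq_add: "(norm (a + b))\<^sup>2 = (norm a)\<^sup>2 + 2 * (a \<bullet> b) + (norm (b::'a::real_inner))\<^sup>2"
  by (simp add: power2_norm_eq_inner inner_add_left inner_add_right inner_commute)

lemma small_contr: "norm (x::'a::real_normed_vector) \<le> r * norm x \<Longrightarrow> r < 1 \<Longrightarrow> x = 0"
proof -
  assume a: "norm x \<le> r * norm x" "r < 1"
  have "(1 - r) * norm x \<le> 0" using a by (simp add: algebra_simps)
  moreover have "1 - r > 0" using a by simp
  ultimately have "norm x \<le> 0" by (simp add: mult_le_0_iff)
  then show "x = 0" by simp
qed

lemma inj_ker: "(\<And>x. (M::real^'n::finite^'m::finite) *v x = 0 \<Longrightarrow> x = 0) \<Longrightarrow> inj ((*v) M)"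
proof (rule injI)
  fix x y assume k: "\<And>x. M *v x = 0 \<Longrightarrow> x = 0" and e: "M *v x = M *v y"
  have "M *v (x - y) = 0" using e by (simp add: matrix_vector_mult_diff_distrib)
  then show "x = y" using k[of "x - y"] by simp
qed

lemma N_exists:
  fixes A P :: "real^'n::finite^'n"
  assumes symA: "dsym A" and symP: "dsym P"
    and PP: "\<And>x. P *v (P *v x) = P *v x"
    and AP: "\<And>x. A *v (P *v x) = P *v x"
    and PA: "\<And>x. P *v (A *v x) = P *v x"
    and r0: "0 \<le> r" and r1: "r < 1" and rB: "\<And>v. norm ((P - A) *v v) \<le> r * norm v"
  shows "\<exists>N c. c > 0 \<and> dsym N \<and> (\<forall>v. 0 \<le> v \<bullet> (N *v v)) \<and> (\<forall>v. c * (v \<bullet> (N *v v)) \<le> (norm (N *v v))\<^sup>2)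
     \<and> (\<forall>x y. ((1/2) *\<^sub>R (mat 1 + A)) *v x = y \<longrightarrow> x = y + N *v y)
     \<and> (\<forall>x. P *v x = x \<longrightarrow> N *v x = 0) \<and> (\<forall>g. P *v g = 0 \<longrightarrow> (\<exists>q. N *v q = g))"
proof -
  define Ab where "Ab = (1/2) *\<^sub>R (mat 1 + A)"
  have Abv: "Ab *v y = (1/2) *\<^sub>R (y + A *v y)" for y unfolding Ab_def by (rule Ab_vec)
  define B where "B = P - A"
  have Bv: "B *v y = P *v y - A *v y" for y unfolding B_def by (simp add: matrix_vector_mult_diff_rdistrib)
  have rB': "norm (B *v v) \<le> r * norm v" for v unfolding B_def by (rule rB)
  have Plin: "P *v (a + b) = P *v a + P *v b" "P *v (a - b) = P *v a - P *v b" "P *v (t *\<^sub>R a) = t *\<^sub>R (P *v a)" for a b t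
    by (simp_all add: matrix_vector_right_distrib matrix_vector_mult_diff_distrib matrix_vector_mult_scaleR)
  have Alin: "A *v (a + b) = A *v a + A *v b" "A *v (a - b) = A *v a - A *v b" "A *v (t *\<^sub>R a) = t *\<^sub>R (A *v a)" for a b t
    by (simp_all add: matrix_vector_right_distrib matrix_vector_mult_diff_distrib matrix_vector_mult_scaleR)
  have PB: "P *v (B *v y) = 0" for y using PP PA by (simp add: Bv Plin)
  have BP: "B *v (P *v y) = 0" for y using PP AP by (simp add: Bv)
  have Bperp: "B *v y = B *v (y - P *v y)" for y
    using BP[of y] by (simp add: Bv Plin Alin PP)
  have Pperp: "(P *v y) \<bullet> (y - P *v y) = 0" for y
  proof -
    have "(P *v y) \<bullet> (P *v y) = y \<bullet> (P *v (P *v y))" using symP unfolding dsym_def by blast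
    then have "(P *v y) \<bullet> (P *v y) = (P *v y) \<bullet> y" using PP by (simp add: inner_commute)
    then show ?thesis by (simp add: inner_diff_right)
  qed
  have PBperp: "(P *v y) \<bullet> (B *v z) = 0" for y z
  proof -
    have "(P *v y) \<bullet> (B *v z) = y \<bullet> (P *v (B *v z))" using symP unfolding dsym_def by blast
    then show ?thesis using PB by simp
  qed
  have injAb: "inj ((*v) Ab)"
  proof -
    have "x = 0" if "Ab *v x = 0" for x
    proof -
      have x1: "x + A *v x = 0" using that by (simp add: Abv)
      then have "P *v x + P *v (A *v x) = 0" using Plin(1)[of x "A *v x"] by simp
      then have "(2::real) *\<^sub>R (P *v x) = 0" using PA by (simp add: scaleR_2)
      then have px: "P *v x = 0" by simp
      have "- x = A *v x" using x1 by (rule add.inverse_unique)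
      then have "B *v x = x" using px by (simp add: Bv flip: \<open>- x = A *v x\<close>)
      then have "norm x \<le> r * norm x" using rB'[of x] by simp
      then show ?thesis using r1 by (rule small_contr)
    qed
    then show ?thesis by (rule inj_ker)
  qed
  have invAb: "invertible Ab" using injAb inj_invertible by blast
  define Ai where "Ai = matrix_inv Ab"
  have AiAb: "Ai *v (Ab *v y) = y" "Ab *v (Ai *v y) = y" for y unfolding Ai_def using matrix_inv_vec[OF invAb] by auto
  define N where "N = Ai - mat 1"
  have Nv: "N *v v = Ai *v v - v" for v by (simp add: N_def matrix_vector_mult_diff_rdistrib)
  have NAb: "N *v (Ab *v y) = (1/2) *\<^sub>R (y - A *v y)" for y
  proof -
    have e: "y = (1/2) *\<^sub>R (y + y)" by simp
    have "N *v (Ab *v y) = y - (1/2) *\<^sub>R (y + A *v y)" by (simp only: Nv AiAb(1)) (simp only: Abv)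
    also have "\<dots> = (1/2) *\<^sub>R (y + y) - (1/2) *\<^sub>R (y + A *v y)" using e by simp
    also have "\<dots> = (1/2) *\<^sub>R ((y + y) - (y + A *v y))" by (simp only: scaleR_diff_right)
    also have "(y + y) - (y + A *v y) = y - A *v y" by simp
    finally show ?thesis .
  qed
  have surjAb: "\<exists>a. v = Ab *v a" for v by (rule exI[of _ "Ai *v v"]) (simp add: AiAb)
  have symN: "dsym N"
    unfolding dsym_def
  proof (intro allI)
    fix u v
    obtain a where a: "u = Ab *v a" using surjAb by blast
    obtain b where b: "v = Ab *v b" using surjAb by blast
    have s: "a \<bullet> (A *v b) = (A *v a) \<bullet> b" using symA unfolding dsym_def by simp
    show "(N *v u) \<bullet> v = u \<bullet> (N *v v)"
      unfolding a b NAb unfolding Abv using s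
      by (simp add: inner_diff_left inner_diff_right inner_add_left inner_add_right algebra_simps)
  qed
  have quad: "(Ab *v a) \<bullet> (N *v (Ab *v a)) = (1/4) * ((norm (a - P *v a))\<^sup>2 - (norm (B *v (a - P *v a)))\<^sup>2)" for a
  proof -
    have s: "a \<bullet> (A *v a) = (A *v a) \<bullet> a" by (simp add: inner_commute)
    have "(Ab *v a) \<bullet> (N *v (Ab *v a)) = (1/4) * ((norm a)\<^sup>2 - (norm (A *v a))\<^sup>2)"
      unfolding NAb unfolding Abv
      by (simp add: inner_diff_left inner_diff_right inner_add_left inner_add_right power2_norm_eq_inner inner_commute algebra_simps)
    moreover have "(norm a)\<^sup>2 = (norm (P *v a))\<^sup>2 + (norm (a - P *v a))\<^sup>2"
      using norm_sq_add[of "P *v a" "a - P *v a"] Pperp[of a] by simp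
    moreover have "(norm (A *v a))\<^sup>2 = (norm (P *v a))\<^sup>2 + (norm (B *v a))\<^sup>2"
    proof -
      have "A *v a = P *v a - B *v a" by (simp add: Bv)
      then show ?thesis using norm_sq_diff[of "P *v a" "B *v a"] PBperp[of a a] by simp
    qed
    ultimately show ?thesis using Bperp[of a] by simp
  qed
  have psd: "0 \<le> v \<bullet> (N *v v)" for v
  proof -
    obtain a where a: "v = Ab *v a" using surjAb by blast
    have "r * norm (a - P *v a) \<le> 1 * norm (a - P *v a)" using r1 by (intro mult_right_mono) auto
    then have "norm (B *v (a - P *v a)) \<le> norm (a - P *v a)" using rB'[of "a - P *v a"] by simp
    then have "(norm (B *v (a - P *v a)))\<^sup>2 \<le> (norm (a - P *v a))\<^sup>2" by (simp add: power_mono)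
    then show ?thesis unfolding a quad by simp
  qed
  define c where "c = (1 - r)\<^sup>2"
  have c0: "c > 0" using r1 by (simp add: c_def)
  have cN: "c * (v \<bullet> (N *v v)) \<le> (norm (N *v v))\<^sup>2" for v
  proof -
    obtain a where a: "v = Ab *v a" using surjAb by blast
    define z where "z = a - P *v a"
    have q: "v \<bullet> (N *v v) \<le> (1/4) * (norm z)\<^sup>2" unfolding a quad z_def[symmetric] by simp
    have "N *v v = (1/2) *\<^sub>R (z + B *v z)"
      unfolding a NAb z_def using Bperp[of a] by (simp add: Bv algebra_simps)
    then have nN: "norm (N *v v) = (1/2) * norm (z + B *v z)" by simp
    have "norm (z + B *v z) \<ge> norm z - norm (B *v z)" by (rule norm_diff_ineq)
    then have "norm (z + B *v z) \<ge> (1 - r) * norm z" using rB'[of z] by (simp add: algebra_simps)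
    then have "(norm (z + B *v z))\<^sup>2 \<ge> ((1 - r) * norm z)\<^sup>2" using r1 by (intro power_mono) auto
    then have "(norm (N *v v))\<^sup>2 \<ge> (1/4) * c * (norm z)\<^sup>2" unfolding nN c_def by (simp add: power_mult_distrib power_divide)
    moreover have "c * (v \<bullet> (N *v v)) \<le> c * ((1/4) * (norm z)\<^sup>2)" using q c0 by (intro mult_left_mono) auto
    ultimately show ?thesis by simp
  qed
  have rec: "x = y + N *v y" if "((1/2) *\<^sub>R (mat 1 + A)) *v x = y" for x y
  proof -
    have "Ab *v x = y" using that by (simp add: Ab_def)
    then have "x = Ai *v y" using AiAb(1)[of x] by simp
    then show ?thesis by (simp add: Nv)
  qed
  have null: "N *v x = 0" if "P *v x = x" for x
  proof -
    have Ax: "A *v x = x" using AP[of x] that by simp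
    have "Ab *v x = x" by (simp add: Abv Ax)
    then have "N *v x = N *v (Ab *v x)" by simp
    also have "\<dots> = 0" by (simp add: NAb Ax)
    finally show ?thesis .
  qed
  have range: "\<exists>q. N *v q = g" if pg: "P *v g = 0" for g
  proof -
    define M where "M = (1/2) *\<^sub>R (mat 1 - A) + P"
    have Mv: "M *v y = (1/2) *\<^sub>R (y - A *v y) + P *v y" for y
      by (simp add: M_def matrix_vector_mult_add_rdistrib scaleR_matrix_vector_assoc[symmetric] matrix_vector_mult_diff_rdistrib)
    have PM: "P *v (M *v y) = P *v y" for y using PP PA by (simp add: Mv Plin)
    have "x = 0" if "M *v x = 0" for x
    proof -
      have px: "P *v x = 0" using PM[of x] that by simp
      then have "x - A *v x = 0" using that by (simp add: Mv)
      then have "B *v x = - x" using px by (simp add: Bv)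
      then have "norm x \<le> r * norm x" using rB'[of x] by simp
      then show ?thesis using r1 by (rule small_contr)
    qed
    then have "inj ((*v) M)" by (rule inj_ker)
    then have "surj ((*v) M)" by (rule inj_surj_mat)
    then obtain y where y: "M *v y = g" by (metis surjD)
    have "P *v y = 0" using PM[of y] y pg by simp
    then have "(1/2) *\<^sub>R (y - A *v y) = g" using y by (simp add: Mv)
    then show ?thesis using NAb[of y] by (intro exI[of _ "Ab *v y"]) simp
  qed
  show ?thesis
    by (intro exI[of _ N] exI[of _ c] conjI allI impI c0 symN psd cN rec null range) auto
qed


declare transpose_matrix_vector[simp del]

lemma proj_props:
  fixes U :: "real^'p::finite^'n::finite"
  assumes rk: "rank U = CARD('p)"
  shows "dsym (proj_range U)" "\<And>x. proj_range U *v (proj_range U *v x) = proj_range U *v x"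
    "\<And>x. proj_range U *v (U *v x) = U *v x" "\<And>g. transpose U *v g = 0 \<Longrightarrow> proj_range U *v g = 0"
proof -
  define K where "K = transpose U ** U"
  have Kv: "K *v x = transpose U *v (U *v x)" for x by (simp add: K_def matrix_vector_mul_assoc)
  have injU: "inj ((*v) U)" using rk full_rank_injective by blast
  have Kd: "(K *v a) \<bullet> b = (U *v a) \<bullet> (U *v b)" for a b by (simp add: Kv transpose_dot)
  have "inj ((*v) K)"
  proof (rule injI)
    fix x y assume "K *v x = K *v y"
    then have "K *v (x - y) = 0" by (simp add: matrix_vector_mult_diff_distrib)
    then have "(U *v (x - y)) \<bullet> (U *v (x - y)) = 0" using Kd[of "x - y" "x - y"] by simp
    then have "U *v (x - y) = 0" by simp
    then have "U *v x = U *v y" by (simp add: matrix_vector_mult_diff_distrib)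
    then show "x = y" using injU by (simp add: inj_eq)
  qed
  then have invK: "invertible K" by (rule inj_invertible)
  define Ki where "Ki = matrix_inv K"
  have KiK: "Ki *v (K *v y) = y" "K *v (Ki *v y) = y" for y unfolding Ki_def using matrix_inv_vec[OF invK] by auto
  have symKi: "(Ki *v a) \<bullet> b = a \<bullet> (Ki *v b)" for a b
  proof -
    have 1: "(Ki *v a) \<bullet> b = (U *v (Ki *v b)) \<bullet> (U *v (Ki *v a))"
      using Kd[of "Ki *v b" "Ki *v a"] KiK(2)[of b] by (simp add: inner_commute)
    have 2: "a \<bullet> (Ki *v b) = (U *v (Ki *v a)) \<bullet> (U *v (Ki *v b))"
      using Kd[of "Ki *v a" "Ki *v b"] KiK(2)[of a] by simp
    show ?thesis using 1 2 by (simp add: inner_commute)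
  qed
  have Pv: "proj_range U *v x = U *v (Ki *v (transpose U *v x))" for x
    by (simp add: proj_range_def K_def Ki_def matrix_vector_mul_assoc matrix_mul_assoc)
  have td: "(U *v c) \<bullet> b = c \<bullet> (transpose U *v b)" for c b using transpose_dot[of U b c] by (simp add: inner_commute)
  show "dsym (proj_range U)" unfolding dsym_def
  proof (intro allI)
    fix a b
    show "(proj_range U *v a) \<bullet> b = a \<bullet> (proj_range U *v b)"
      unfolding Pv td by (simp add: symKi transpose_dot)
  qed
  show "proj_range U *v (proj_range U *v x) = proj_range U *v x" for x
    unfolding Pv by (simp add: Kv[symmetric] KiK)
  show "proj_range U *v (U *v x) = U *v x" for x
    unfolding Pv by (simp add: Kv[symmetric] KiK)
  show "proj_range U *v g = 0" if "transpose U *v g = 0" for g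
    unfolding Pv using that by simp
qed

declare transpose_matrix_vector[simp]


declare transpose_matrix_vector[simp del]

lemma blk_comp: "blk w k $ j = w $ (k, j)" by (simp add: blk_def)

lemma blk_add: "blk (x + y) k = blk x k + blk y k"
  and blk_diff: "blk (x - y) k = blk x k - blk y k"
  and blk_scale: "blk (c *\<^sub>R x) k = c *\<^sub>R blk x k"
  and blk_zero: "blk 0 k = 0"
  by (simp_all add: blk_def vec_eq_iff)

lemma blk_netgrad: "blk (netgrad g w) k = g k (blk w k)"
  by (simp add: blk_def netgrad_def vec_eq_iff)

lemma inner_blk: "x \<bullet> y = (\<Sum>k\<in>UNIV. blk x k \<bullet> blk (y::real^('k::finite\<times>'m::finite)) k)"
proof -
  have "x \<bullet> y = (\<Sum>kj\<in>UNIV. x$kj * y$kj)" by (simp add: inner_vec_def)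
  also have "\<dots> = (\<Sum>kj\<in>UNIV \<times> UNIV. x$kj * y$kj)" by simp
  also have "\<dots> = (\<Sum>k\<in>UNIV. \<Sum>j\<in>UNIV. x$(k,j) * y$(k,j))"
    by (simp add: sum.cartesian_product)
  also have "\<dots> = (\<Sum>k\<in>UNIV. blk x k \<bullet> blk y k)" by (simp add: inner_vec_def blk_def)
  finally show ?thesis .
qed

lemma norm2_blk: "(norm x)\<^sup>2 = (\<Sum>k\<in>UNIV. (norm (blk (x::real^('k::finite\<times>'m::finite)) k))\<^sup>2)"
  by (simp add: power2_norm_eq_inner inner_blk[of x x])

lemma norm_sq_diff': "(norm (a - b))\<^sup>2 = (norm a)\<^sup>2 - 2 * (a \<bullet> b) + (norm (b::'a::real_inner))\<^sup>2"
  by (simp add: power2_norm_eq_inner inner_diff_left inner_diff_right inner_commute)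

lemma grad_contract:
  fixes gradJ :: "'k::finite \<Rightarrow> real^'m::finite \<Rightarrow> real^'m"
  assumes strong: "\<And>k x y. (gradJ k x - gradJ k y) \<bullet> (x - y) \<ge> nu k * (norm (x - y))\<^sup>2"
    and lip: "\<And>k x y. norm (gradJ k x - gradJ k y) \<le> delta k * norm (x - y)"
    and nu: "\<And>k. nu0 \<le> nu k" and de: "\<And>k. 0 \<le> delta k \<and> delta k \<le> delta0"
    and mu: "0 \<le> mu"
  shows "(norm ((w - ws) - mu *\<^sub>R (netgrad gradJ w - netgrad gradJ ws)))\<^sup>2
     \<le> (1 - 2 * mu * nu0 + mu\<^sup>2 * delta0\<^sup>2) * (norm (w - ws))\<^sup>2"
proof -
  define e where "e = w - ws"
  define G where "G = netgrad gradJ w - netgrad gradJ ws"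
  have bG: "blk G k = gradJ k (blk w k) - gradJ k (blk ws k)" for k by (simp add: G_def blk_diff blk_netgrad)
  have be: "blk e k = blk w k - blk ws k" for k by (simp add: e_def blk_diff)
  have eG: "e \<bullet> G \<ge> nu0 * (norm e)\<^sup>2"
  proof -
    have "nu0 * (norm e)\<^sup>2 = (\<Sum>k\<in>UNIV. nu0 * (norm (blk e k))\<^sup>2)" by (simp add: norm2_blk sum_distrib_left)
    also have "\<dots> \<le> (\<Sum>k\<in>UNIV. blk e k \<bullet> blk G k)"
    proof (rule sum_mono)
      fix k
      have "nu0 * (norm (blk e k))\<^sup>2 \<le> nu k * (norm (blk e k))\<^sup>2" using nu[of k] by (intro mult_right_mono) auto
      also have "\<dots> \<le> blk e k \<bullet> blk G k" using strong[of k "blk w k" "blk ws k"] by (simp add: bG be inner_commute)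
      finally show "nu0 * (norm (blk e k))\<^sup>2 \<le> blk e k \<bullet> blk G k" .
    qed
    also have "\<dots> = e \<bullet> G" by (simp add: inner_blk[of e G])
    finally show ?thesis .
  qed
  have GG: "(norm G)\<^sup>2 \<le> delta0\<^sup>2 * (norm e)\<^sup>2"
  proof -
    have "(norm G)\<^sup>2 = (\<Sum>k\<in>UNIV. (norm (blk G k))\<^sup>2)" by (rule norm2_blk)
    also have "\<dots> \<le> (\<Sum>k\<in>UNIV. delta0\<^sup>2 * (norm (blk e k))\<^sup>2)"
    proof (rule sum_mono)
      fix k
      have "norm (blk G k) \<le> delta k * norm (blk e k)" using lip[of k "blk w k" "blk ws k"] by (simp add: bG be)
      also have "\<dots> \<le> delta0 * norm (blk e k)" using de[of k] by (intro mult_right_mono) auto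
      finally have "norm (blk G k) \<le> delta0 * norm (blk e k)" .
      then have "(norm (blk G k))\<^sup>2 \<le> (delta0 * norm (blk e k))\<^sup>2" by (intro power_mono) auto
      then show "(norm (blk G k))\<^sup>2 \<le> delta0\<^sup>2 * (norm (blk e k))\<^sup>2" by (simp add: power_mult_distrib)
    qed
    also have "\<dots> = delta0\<^sup>2 * (norm e)\<^sup>2" by (simp add: norm2_blk[of e] sum_distrib_left)
    finally show ?thesis .
  qed
  have "(norm (e - mu *\<^sub>R G))\<^sup>2 = (norm e)\<^sup>2 - 2 * mu * (e \<bullet> G) + mu\<^sup>2 * (norm G)\<^sup>2"
    by (simp add: norm_sq_diff'[of e "mu *\<^sub>R G"] power_mult_distrib)
  also have "\<dots> \<le> (norm e)\<^sup>2 - 2 * mu * (nu0 * (norm e)\<^sup>2) + mu\<^sup>2 * (delta0\<^sup>2 * (norm e)\<^sup>2)"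
    using eG GG mu by (intro add_mono diff_mono mult_left_mono) auto
  also have "\<dots> = (1 - 2 * mu * nu0 + mu\<^sup>2 * delta0\<^sup>2) * (norm e)\<^sup>2" by (simp add: algebra_simps)
  finally show ?thesis by (simp add: e_def G_def)
qed

lemma kkt:
  fixes J :: "'k::finite \<Rightarrow> real^'m::finite \<Rightarrow> real"
    and U :: "real^'p::finite^('k \<times> 'm)"
  assumes grad: "\<And>k x. (J k has_derivative (\<lambda>h. gradJ k x \<bullet> h)) (at x)"
    and wstar_in: "wstar \<in> range (\<lambda>x. U *v x)"
    and wstar_min: "\<And>w. w \<in> range (\<lambda>x. U *v x) \<Longrightarrow>
                      (\<Sum>k\<in>UNIV. J k (blk wstar k)) \<le> (\<Sum>k\<in>UNIV. J k (blk w k))"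
  shows "transpose U *v netgrad gradJ wstar = 0"
proof -
  obtain x0 where x0: "wstar = U *v x0" using wstar_in by auto
  have orth: "netgrad gradJ wstar \<bullet> (U *v x) = 0" for x
  proof -
    define v where "v = U *v x"
    define f where "f t = (\<Sum>k\<in>UNIV. J k (blk (wstar + t *\<^sub>R v) k))" for t
    define c where "c = (\<Sum>k\<in>UNIV. gradJ k (blk wstar k) \<bullet> blk v k)"
    have d: "(f has_derivative (\<lambda>t. \<Sum>k\<in>UNIV. gradJ k (blk wstar k) \<bullet> (t *\<^sub>R blk v k))) (at 0)"
    proof -
      have "((\<lambda>t. J k (blk (wstar + t *\<^sub>R v) k)) has_derivative (\<lambda>t. gradJ k (blk wstar k) \<bullet> (t *\<^sub>R blk v k))) (at 0)" for k
      proof -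
        have l: "((\<lambda>t. blk wstar k + t *\<^sub>R blk v k) has_derivative (\<lambda>t. t *\<^sub>R blk v k)) (at (0::real))"
          by (auto intro!: derivative_eq_intros)
        have g: "(J k has_derivative (\<lambda>h. gradJ k (blk wstar k) \<bullet> h)) (at ((\<lambda>t. blk wstar k + t *\<^sub>R blk v k) 0))"
          using grad[of k "blk wstar k"] by simp
        from diff_chain_at[OF l g] show ?thesis by (simp add: o_def blk_add blk_scale)
      qed
      then show ?thesis unfolding f_def by (intro has_derivative_sum) auto
    qed
    have h1: "(f has_field_derivative c) (at 0)"
      unfolding has_field_derivative_def
    proof -
      have "(\<lambda>t. \<Sum>k\<in>UNIV. gradJ k (blk wstar k) \<bullet> (t *\<^sub>R blk v k)) = (*) c"
        by (simp add: fun_eq_iff c_def sum_distrib_left sum_distrib_right mult.commute)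
      then show "(f has_derivative (*) c) (at 0)" using d by simp
    qed
    have h2: "\<forall>y. \<bar>0 - y\<bar> < 1 \<longrightarrow> f 0 \<le> f y"
    proof (intro allI impI)
      fix y :: real
      have "wstar + y *\<^sub>R v = U *v (x0 + y *\<^sub>R x)" by (simp add: x0 v_def matrix_vector_right_distrib matrix_vector_mult_scaleR)
      then have "wstar + y *\<^sub>R v \<in> range (\<lambda>x. U *v x)" by auto
      then show "f 0 \<le> f y" unfolding f_def using wstar_min by simp
    qed
    have "c = 0" using DERIV_local_min[OF h1 _ h2] by simp
    then show ?thesis by (simp add: c_def v_def inner_blk blk_netgrad)
  qed
  have "(transpose U *v netgrad gradJ wstar) \<bullet> (transpose U *v netgrad gradJ wstar) = 0"
    by (simp add: transpose_dot orth)
  then show ?thesis by simp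
qed

declare transpose_matrix_vector[simp]


lemma lyap_identity:
  fixes N :: "real^'n::finite^'n"
  assumes sym: "dsym N" and e1: "e' + N *v u' = a" and u1: "u' = u + e'"
  shows "(norm e')\<^sup>2 + e' \<bullet> (N *v e') + u' \<bullet> (N *v u') + (norm (N *v u'))\<^sup>2 = (norm a)\<^sup>2 + u \<bullet> (N *v u)"
proof -
  have s: "e' \<bullet> (N *v u) = u \<bullet> (N *v e')" using sym unfolding dsym_def by (metis inner_commute)
  have "(norm a)\<^sup>2 = (norm e')\<^sup>2 + 2 * (e' \<bullet> (N *v u')) + (norm (N *v u'))\<^sup>2"
    unfolding e1[symmetric] by (simp add: power2_norm_eq_inner inner_add_left inner_add_right inner_commute)
  moreover have "e' \<bullet> (N *v u') = e' \<bullet> (N *v u) + e' \<bullet> (N *v e')"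
    unfolding u1 by (simp add: matrix_vector_right_distrib inner_add_right)
  moreover have "u' \<bullet> (N *v u') = u \<bullet> (N *v u) + 2 * (e' \<bullet> (N *v u)) + e' \<bullet> (N *v e')"
    unfolding u1 using s by (simp add: matrix_vector_right_distrib inner_add_right inner_add_left)
  ultimately show ?thesis by simp
qed


lemma sfs: "prob_space M \<Longrightarrow> subalgebra M G \<Longrightarrow> sigma_finite_subalgebra M G"
  by (intro finite_measure_subalgebra_is_sigma_finite finite_measure_subalgebra.intro
      finite_measure_subalgebra_axioms.intro) (auto simp: prob_space_def)

lemma noise_bound:
  assumes sf: "sigma_finite_subalgebra M G" and hm: "h \<in> borel_measurable M" and h0: "\<And>\<omega>. 0 \<le> h \<omega>"
    and ae: "AE \<omega> in M. nn_cond_exp M G (\<lambda>\<omega>. ennreal (h \<omega>)) \<omega> \<le> ennreal (b \<omega>)"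
    and bi: "integrable M b" and b0: "\<And>\<omega>. 0 \<le> b \<omega>"
  shows "integrable M h" "integral\<^sup>L M h \<le> integral\<^sup>L M b"
proof -
  interpret sigma_finite_subalgebra M G by (rule sf)
  have "(\<integral>\<^sup>+ \<omega>. ennreal (h \<omega>) \<partial>M) = (\<integral>\<^sup>+ \<omega>. 1 * ennreal (h \<omega>) \<partial>M)" by simp
  also have "\<dots> = (\<integral>\<^sup>+ \<omega>. 1 * nn_cond_exp M G (\<lambda>\<omega>. ennreal (h \<omega>)) \<omega> \<partial>M)"
    by (rule nn_cond_exp_intg[symmetric]) (use hm in auto)
  also have "\<dots> \<le> (\<integral>\<^sup>+ \<omega>. ennreal (b \<omega>) \<partial>M)"
    using ae by (intro nn_integral_mono_AE) auto
  also have "\<dots> = ennreal (integral\<^sup>L M b)"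
    by (rule nn_integral_eq_integral) (use bi b0 in auto)
  finally have le: "(\<integral>\<^sup>+ \<omega>. ennreal (h \<omega>) \<partial>M) \<le> ennreal (integral\<^sup>L M b)" .
  have ih: "integrable M h"
  proof (rule integrableI_bounded)
    show "h \<in> borel_measurable M" by (rule hm)
    have "(\<integral>\<^sup>+ \<omega>. ennreal (norm (h \<omega>)) \<partial>M) = (\<integral>\<^sup>+ \<omega>. ennreal (h \<omega>) \<partial>M)" using h0 by simp
    then show "(\<integral>\<^sup>+ \<omega>. ennreal (norm (h \<omega>)) \<partial>M) < \<infinity>" using le by (simp add: order_le_less_trans)
  qed
  show "integrable M h" by (rule ih)
  have "ennreal (integral\<^sup>L M h) = (\<integral>\<^sup>+ \<omega>. ennreal (h \<omega>) \<partial>M)"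
    by (rule nn_integral_eq_integral[symmetric]) (use ih h0 in auto)
  then have "ennreal (integral\<^sup>L M h) \<le> ennreal (integral\<^sup>L M b)" using le by simp
  moreover have "0 \<le> integral\<^sup>L M b" using b0 by (simp add: integral_nonneg)
  ultimately show "integral\<^sup>L M h \<le> integral\<^sup>L M b" by (simp add: ennreal_le_iff)
qed

lemma orth:
  assumes sf: "sigma_finite_subalgebra M G" and am: "a \<in> borel_measurable G" and bm: "b \<in> borel_measurable M"
    and int: "integrable M (\<lambda>\<omega>. a \<omega> * b \<omega>)" and ae: "AE \<omega> in M. real_cond_exp M G b \<omega> = 0"
  shows "integral\<^sup>L M (\<lambda>\<omega>. a \<omega> * b \<omega>) = 0"
proof -
  interpret sigma_finite_subalgebra M G by (rule sf)
  have "integral\<^sup>L M (\<lambda>\<omega>. a \<omega> * b \<omega>) = integral\<^sup>L M (\<lambda>\<omega>. a \<omega> * real_cond_exp M G b \<omega>)"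
    by (rule real_cond_exp_intg(2)[symmetric]) (use int am bm in auto)
  also have "\<dots> = integral\<^sup>L M (\<lambda>\<omega>. 0)"
  proof (rule integral_cong_AE)
    have [measurable]: "a \<in> borel_measurable M" using measurable_from_subalg[OF subalg am] .
    have [measurable]: "real_cond_exp M G b \<in> borel_measurable M"
      by (rule borel_measurable_cond_exp2)
    show "(\<lambda>\<omega>. a \<omega> * real_cond_exp M G b \<omega>) \<in> borel_measurable M" by measurable
    show "(\<lambda>\<omega>. 0) \<in> borel_measurable M" by simp
    show "AE \<omega> in M. a \<omega> * real_cond_exp M G b \<omega> = 0" using ae by auto
  qed
  finally show ?thesis by simp
qed


definition L2 :: "'a measure \<Rightarrow> 'a measure \<Rightarrow> ('a \<Rightarrow> real^'n::finite) \<Rightarrow> bool" where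
  "L2 M G f \<longleftrightarrow> f \<in> borel_measurable G \<and> integrable M (\<lambda>\<omega>. (norm (f \<omega>))\<^sup>2)"

lemma L2_M: "subalgebra M G \<Longrightarrow> L2 M G f \<Longrightarrow> f \<in> borel_measurable M"
  unfolding L2_def using measurable_from_subalg by blast

lemma L2_int: "L2 M G f \<Longrightarrow> integrable M (\<lambda>\<omega>. (norm (f \<omega>))\<^sup>2)"
  unfolding L2_def by blast

lemma L2_mono: "subalgebra M G' \<Longrightarrow> subalgebra M G \<Longrightarrow> sets G \<subseteq> sets G' \<Longrightarrow> L2 M G f \<Longrightarrow> L2 M G' f"
  unfolding L2_def subalgebra_def using measurable_from_subalg[of G' G]
  by (auto simp: subalgebra_def)

lemma sq_add_le: "(norm (a + b))\<^sup>2 \<le> 2 * (norm a)\<^sup>2 + 2 * (norm (b::'a::real_normed_vector))\<^sup>2"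
proof -
  have "norm (a + b) \<le> norm a + norm b" by (rule norm_triangle_ineq)
  then have "(norm (a + b))\<^sup>2 \<le> (norm a + norm b)\<^sup>2" by (intro power_mono) auto
  also have "\<dots> \<le> 2 * (norm a)\<^sup>2 + 2 * (norm b)\<^sup>2"
    using sum_squares_bound[of "norm a" "norm b"] by (simp add: power2_eq_square algebra_simps)
  finally show ?thesis .
qed

lemma L2_add: "subalgebra M G \<Longrightarrow> L2 M G f \<Longrightarrow> L2 M G g \<Longrightarrow> L2 M G (\<lambda>\<omega>. f \<omega> + g \<omega>)"
proof -
  assume sa: "subalgebra M G" and f: "L2 M G f" and g: "L2 M G g"
  have [measurable]: "f \<in> borel_measurable G" "g \<in> borel_measurable G" using f g by (auto simp: L2_def)
  have [measurable]: "f \<in> borel_measurable M" "g \<in> borel_measurable M" using f g sa L2_M by auto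
  have "integrable M (\<lambda>\<omega>. (norm (f \<omega> + g \<omega>))\<^sup>2)"
  proof (rule Bochner_Integration.integrable_bound)
    show "integrable M (\<lambda>\<omega>. 2 * (norm (f \<omega>))\<^sup>2 + 2 * (norm (g \<omega>))\<^sup>2)"
      using f g by (auto simp: L2_def)
    show "(\<lambda>\<omega>. (norm (f \<omega> + g \<omega>))\<^sup>2) \<in> borel_measurable M" by measurable
    show "AE \<omega> in M. norm ((norm (f \<omega> + g \<omega>))\<^sup>2) \<le> norm (2 * (norm (f \<omega>))\<^sup>2 + 2 * (norm (g \<omega>))\<^sup>2)"
      using sq_add_le by auto
  qed
  moreover have "(\<lambda>\<omega>. f \<omega> + g \<omega>) \<in> borel_measurable G" by measurable
  ultimately show ?thesis unfolding L2_def by simp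
qed

lemma L2_scale: "L2 M G f \<Longrightarrow> L2 M G (\<lambda>\<omega>. c *\<^sub>R f \<omega>)"
  unfolding L2_def by (auto simp: power_mult_distrib)

lemma L2_uminus: "L2 M G f \<Longrightarrow> L2 M G (\<lambda>\<omega>. - f \<omega>)"
  unfolding L2_def by auto

lemma L2_diff: "subalgebra M G \<Longrightarrow> L2 M G f \<Longrightarrow> L2 M G g \<Longrightarrow> L2 M G (\<lambda>\<omega>. f \<omega> - g \<omega>)"
  using L2_add[of M G f "\<lambda>\<omega>. - g \<omega>"] L2_uminus[of M G g] by simp

lemma L2_const: "prob_space M \<Longrightarrow> L2 M G (\<lambda>\<omega>. c)"
  unfolding L2_def by (auto intro: finite_measure.integrable_const simp: prob_space_def)

lemma L2_lip:
  assumes sa: "subalgebra M G" and pm: "prob_space M" and f: "L2 M G f"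
    and lip: "\<And>x y. norm (h x - h y) \<le> L * norm (x - y)" and L0: "0 \<le> L"
  shows "L2 M G (\<lambda>\<omega>. (h (f \<omega>) :: real^'m::finite))"
proof -
  have "L-lipschitz_on UNIV h" by (rule lipschitz_onI) (use lip L0 in \<open>auto simp: dist_norm\<close>)
  then have ch: "continuous_on UNIV h" by (rule lipschitz_on_continuous_on)
  have [measurable]: "f \<in> borel_measurable G" "f \<in> borel_measurable M" using f sa L2_M by (auto simp: L2_def)
  have hG: "(\<lambda>\<omega>. h (f \<omega>)) \<in> borel_measurable G" by (rule borel_measurable_continuous_on[OF ch]) simp
  have hM[measurable]: "(\<lambda>\<omega>. h (f \<omega>)) \<in> borel_measurable M" by (rule borel_measurable_continuous_on[OF ch]) simp
  have b: "norm (h x) \<le> norm (h 0) + L * norm x" for x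
    using lip[of x 0] norm_triangle_ineq2[of "h x" "h 0"] by simp
  have "integrable M (\<lambda>\<omega>. (norm (h (f \<omega>)))\<^sup>2)"
  proof (rule Bochner_Integration.integrable_bound)
    show "integrable M (\<lambda>\<omega>. 2 * (norm (h 0))\<^sup>2 + 2 * (L\<^sup>2 * (norm (f \<omega>))\<^sup>2))"
      using f pm by (auto simp: L2_def prob_space_def intro!: finite_measure.integrable_const)
    show "(\<lambda>\<omega>. (norm (h (f \<omega>)))\<^sup>2) \<in> borel_measurable M" by measurable
    show "AE \<omega> in M. norm ((norm (h (f \<omega>)))\<^sup>2) \<le> norm (2 * (norm (h 0))\<^sup>2 + 2 * (L\<^sup>2 * (norm (f \<omega>))\<^sup>2))"
    proof (intro AE_I2)
      fix \<omega>
      have "(norm (h (f \<omega>)))\<^sup>2 \<le> (norm (h 0) + L * norm (f \<omega>))\<^sup>2" using b[of "f \<omega>"] by (intro power_mono) auto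
      also have "\<dots> \<le> 2 * (norm (h 0))\<^sup>2 + 2 * (L * norm (f \<omega>))\<^sup>2"
        using sum_squares_bound[of "norm (h 0)" "L * norm (f \<omega>)"] by (simp add: power2_eq_square algebra_simps)
      finally show "norm ((norm (h (f \<omega>)))\<^sup>2) \<le> norm (2 * (norm (h 0))\<^sup>2 + 2 * (L\<^sup>2 * (norm (f \<omega>))\<^sup>2))"
        by (simp add: power_mult_distrib)
    qed
  qed
  then show ?thesis unfolding L2_def using hG by auto
qed

lemma L2_mat: "subalgebra M G \<Longrightarrow> prob_space M \<Longrightarrow> L2 M G f \<Longrightarrow> L2 M G (\<lambda>\<omega>. (A::real^'n::finite^'m::finite) *v f \<omega>)"
proof -
  assume a: "subalgebra M G" "prob_space M" "L2 M G f"
  obtain K where K: "\<And>x. norm (A *v x) \<le> norm x * K" "K > 0"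
    using bounded_linear.pos_bounded[OF matrix_vector_mul_bounded_linear[of A]] by blast
  show ?thesis
    by (rule L2_lip[OF a, of "(*v) A" K]) (use K in \<open>auto simp: matrix_vector_mult_diff_distrib[symmetric] mult.commute\<close>)
qed

lemma L2_inner:
  assumes sa: "subalgebra M G" "subalgebra M G'" and f: "L2 M G f" and g: "L2 M G' g"
  shows "integrable M (\<lambda>\<omega>. f \<omega> \<bullet> g \<omega>)"
proof (rule Bochner_Integration.integrable_bound)
  have [measurable]: "f \<in> borel_measurable M" "g \<in> borel_measurable M" using f g sa L2_M by auto
  show "integrable M (\<lambda>\<omega>. (norm (f \<omega>))\<^sup>2 + (norm (g \<omega>))\<^sup>2)" using f g by (auto simp: L2_def)
  show "(\<lambda>\<omega>. f \<omega> \<bullet> g \<omega>) \<in> borel_measurable M" by measurable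
  show "AE \<omega> in M. norm (f \<omega> \<bullet> g \<omega>) \<le> norm ((norm (f \<omega>))\<^sup>2 + (norm (g \<omega>))\<^sup>2)"
  proof (intro AE_I2)
    fix \<omega>
    have "\<bar>f \<omega> \<bullet> g \<omega>\<bar> \<le> norm (f \<omega>) * norm (g \<omega>)" by (rule Cauchy_Schwarz_ineq2)
    also have "\<dots> \<le> (norm (f \<omega>))\<^sup>2 + (norm (g \<omega>))\<^sup>2"
      using sum_squares_bound[of "norm (f \<omega>)" "norm (g \<omega>)"] mult_nonneg_nonneg[OF norm_ge_zero norm_ge_zero, of "f \<omega>" "g \<omega>"]
      unfolding power2_eq_square by linarith
    finally show "norm (f \<omega> \<bullet> g \<omega>) \<le> norm ((norm (f \<omega>))\<^sup>2 + (norm (g \<omega>))\<^sup>2)" by simp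
  qed
qed

lemma L2_comp_prod:
  assumes sa: "subalgebra M G" "subalgebra M G'" and f: "L2 M G f" and g: "L2 M G' g"
  shows "integrable M (\<lambda>\<omega>. f \<omega> $ i * g \<omega> $ i)"
proof (rule Bochner_Integration.integrable_bound)
  have [measurable]: "f \<in> borel_measurable M" "g \<in> borel_measurable M" using f g sa L2_M by auto
  show "integrable M (\<lambda>\<omega>. (norm (f \<omega>))\<^sup>2 + (norm (g \<omega>))\<^sup>2)" using f g by (auto simp: L2_def)
  have [measurable]: "(\<lambda>x. f x $ i) \<in> borel_measurable M" "(\<lambda>x. g x $ i) \<in> borel_measurable M"
    using measurable_compose[OF \<open>f \<in> borel_measurable M\<close> borel_measurable_nth]
      measurable_compose[OF \<open>g \<in> borel_measurable M\<close> borel_measurable_nth] by auto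
  show "(\<lambda>\<omega>. f \<omega> $ i * g \<omega> $ i) \<in> borel_measurable M" by measurable
  show "AE \<omega> in M. norm (f \<omega> $ i * g \<omega> $ i) \<le> norm ((norm (f \<omega>))\<^sup>2 + (norm (g \<omega>))\<^sup>2)"
  proof (intro AE_I2)
    fix \<omega>
    have "\<bar>f \<omega> $ i * g \<omega> $ i\<bar> \<le> norm (f \<omega>) * norm (g \<omega>)"
      unfolding abs_mult by (intro mult_mono component_le_norm_cart) auto
    also have "\<dots> \<le> (norm (f \<omega>))\<^sup>2 + (norm (g \<omega>))\<^sup>2"
      using sum_squares_bound[of "norm (f \<omega>)" "norm (g \<omega>)"] mult_nonneg_nonneg[OF norm_ge_zero norm_ge_zero, of "f \<omega>" "g \<omega>"]
      unfolding power2_eq_square by linarith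
    finally show "norm (f \<omega> $ i * g \<omega> $ i) \<le> norm ((norm (f \<omega>))\<^sup>2 + (norm (g \<omega>))\<^sup>2)" by simp
  qed
qed


lemma path_rec:
  fixes N Ab :: "real^'n::finite^'n"
  assumes rec: "\<And>x y. Ab *v x = y \<Longrightarrow> x = y + N *v y"
    and p0: "\<forall>\<omega>. psi 0 \<omega> = w 0 \<omega>"
    and wr: "\<forall>i\<ge>1. \<forall>\<omega>. w i \<omega> = Ab *v (w (i - 1) \<omega> + psi i \<omega> - psi (i - 1) \<omega>)"
  shows "w (Suc i) \<omega> = psi (Suc i) \<omega> - N *v (\<Sum>j\<in>{1..Suc i}. w j \<omega>)"
proof (induction i)
  case 0
  have "w 1 \<omega> = Ab *v (w 0 \<omega> + psi 1 \<omega> - psi 0 \<omega>)" using wr by auto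
  then have "w 1 \<omega> = Ab *v psi 1 \<omega>" using p0 by simp
  then have "psi 1 \<omega> = w 1 \<omega> + N *v w 1 \<omega>" using rec[OF sym] by blast
  then show ?case by simp
next
  case (Suc i)
  define Z where "Z = (\<Sum>j\<in>{1..Suc i}. w j \<omega>)"
  have IH: "w (Suc i) \<omega> = psi (Suc i) \<omega> - N *v Z" using Suc.IH by (simp add: Z_def)
  have "w (Suc (Suc i)) \<omega> = Ab *v (w (Suc i) \<omega> + psi (Suc (Suc i)) \<omega> - psi (Suc i) \<omega>)"
    using wr[rule_format, of "Suc (Suc i)"] by simp
  then have "w (Suc i) \<omega> + psi (Suc (Suc i)) \<omega> - psi (Suc i) \<omega> = w (Suc (Suc i)) \<omega> + N *v w (Suc (Suc i)) \<omega>"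
    using rec[OF sym] by blast
  then have "psi (Suc (Suc i)) \<omega> - N *v Z = w (Suc (Suc i)) \<omega> + N *v w (Suc (Suc i)) \<omega>"
    unfolding IH by simp
  moreover have "(\<Sum>j\<in>{1..Suc (Suc i)}. w j \<omega>) = Z + w (Suc (Suc i)) \<omega>"
    by (simp add: sum.cl_ivl_Suc Z_def)
  ultimately show ?case by (simp add: matrix_vector_right_distrib algebra_simps)
qed

lemma path_err:
  fixes N :: "real^'n::finite^'n"
  assumes wrec: "w (Suc i) = psi (Suc i) - N *v z (Suc i)"
    and ps: "psi (Suc i) = w i - mu *\<^sub>R (g (w i) + s)"
    and z: "z (Suc i) = z i + w (Suc i)"
    and Nws: "N *v wstar = 0" and Nq: "N *v q = g wstar"
  shows "(w (Suc i) - wstar) + N *v (z (Suc i) - real (Suc i) *\<^sub>R wstar + mu *\<^sub>R q)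
           = ((w i - wstar) - mu *\<^sub>R (g (w i) - g wstar)) - mu *\<^sub>R s"
    "z (Suc i) - real (Suc i) *\<^sub>R wstar + mu *\<^sub>R q = (z i - real i *\<^sub>R wstar + mu *\<^sub>R q) + (w (Suc i) - wstar)"
proof -
  have "N *v (z (Suc i) - real (Suc i) *\<^sub>R wstar + mu *\<^sub>R q) = N *v z (Suc i) + mu *\<^sub>R g wstar"
    by (simp add: matrix_vector_right_distrib matrix_vector_mult_diff_distrib matrix_vector_mult_scaleR Nws Nq)
  then show "(w (Suc i) - wstar) + N *v (z (Suc i) - real (Suc i) *\<^sub>R wstar + mu *\<^sub>R q)
           = ((w i - wstar) - mu *\<^sub>R (g (w i) - g wstar)) - mu *\<^sub>R s"
    using wrec ps by (simp add: algebra_simps)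
  show "z (Suc i) - real (Suc i) *\<^sub>R wstar + mu *\<^sub>R q = (z i - real i *\<^sub>R wstar + mu *\<^sub>R q) + (w (Suc i) - wstar)"
    using z by (simp add: algebra_simps)
qed

lemma lyap_step:
  fixes N :: "real^'n::finite^'n"
  assumes sym: "dsym N" and cN: "\<And>v. c * (v \<bullet> (N *v v)) \<le> (norm (N *v v))\<^sup>2"
    and e1: "e' + N *v u' = d - mu *\<^sub>R s" and u1: "u' = u + e'"
    and dk: "(norm d)\<^sup>2 \<le> kap * (norm e)\<^sup>2"
  shows "(norm e')\<^sup>2 + e' \<bullet> (N *v e') + (1 + c) * (u' \<bullet> (N *v u'))
    \<le> kap * (norm e)\<^sup>2 + u \<bullet> (N *v u) - 2 * mu * (d \<bullet> s) + mu\<^sup>2 * (norm s)\<^sup>2"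
proof -
  have id: "(norm e')\<^sup>2 + e' \<bullet> (N *v e') + u' \<bullet> (N *v u') + (norm (N *v u'))\<^sup>2 = (norm (d - mu *\<^sub>R s))\<^sup>2 + u \<bullet> (N *v u)"
    by (rule lyap_identity[OF sym e1 u1])
  have "(norm (d - mu *\<^sub>R s))\<^sup>2 = (norm d)\<^sup>2 - 2 * mu * (d \<bullet> s) + mu\<^sup>2 * (norm s)\<^sup>2"
    by (simp add: norm_sq_diff power_mult_distrib)
  then show ?thesis using id cN[of u'] dk by (simp add: algebra_simps)
qed


lemma seq_final:
  fixes a x :: "nat \<Rightarrow> real"
  assumes rec: "\<And>i. a (Suc i) \<le> rho * a i + b" and r0: "0 \<le> rho" and r1: "rho < 1"
    and xa: "\<And>i. x i \<le> a i" and b0: "0 \<le> b"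
  shows "(\<exists>B. \<forall>i. ennreal (x i) \<le> ennreal B) \<and> limsup (\<lambda>i. ennreal (x i)) \<le> ennreal (b / (1 - rho))"
proof -
  define K where "K = b / (1 - rho)"
  have K: "rho * K + b = K" using r1 by (simp add: K_def field_simps)
  have ai: "a i \<le> rho ^ i * a 0 + K" for i
  proof (induction i)
    case 0 then show ?case using r1 b0 by (simp add: K_def)
  next
    case (Suc i)
    have "a (Suc i) \<le> rho * a i + b" by (rule rec)
    also have "\<dots> \<le> rho * (rho ^ i * a 0 + K) + b" using Suc r0 by (intro add_right_mono mult_left_mono) auto
    also have "\<dots> = rho ^ Suc i * a 0 + (rho * K + b)" by (simp add: algebra_simps)
    finally show ?case using K by simp
  qed
  have "rho ^ i * a 0 \<le> \<bar>a 0\<bar>" for i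
  proof -
    have "rho ^ i \<le> 1" using r0 r1 by (simp add: power_le_one)
    then have "rho ^ i * a 0 \<le> rho ^ i * \<bar>a 0\<bar>" using r0 by (intro mult_left_mono) auto
    also have "\<dots> \<le> 1 * \<bar>a 0\<bar>" using \<open>rho ^ i \<le> 1\<close> by (intro mult_right_mono) auto
    finally show ?thesis by simp
  qed
  then have "x i \<le> \<bar>a 0\<bar> + K" for i using ai[of i] xa[of i] by smt
  then have bnd: "\<forall>i. ennreal (x i) \<le> ennreal (\<bar>a 0\<bar> + K)" by (simp add: ennreal_leI)
  have lim: "(\<lambda>i. ennreal (rho ^ i * a 0 + K)) \<longlonglongrightarrow> ennreal K"
  proof -
    have "(\<lambda>i. rho ^ i * a 0 + K) \<longlonglongrightarrow> 0 * a 0 + K"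
      by (intro tendsto_intros LIMSEQ_power_zero) (use r0 r1 in auto)
    then show ?thesis by (intro tendsto_ennrealI) simp
  qed
  have "limsup (\<lambda>i. ennreal (x i)) \<le> limsup (\<lambda>i. ennreal (rho ^ i * a 0 + K))"
    by (intro Limsup_mono always_eventually allI ennreal_leI order.trans[OF xa ai])
  also have "\<dots> = ennreal K" by (rule lim_imp_Limsup[OF _ lim]) simp
  finally show ?thesis using bnd K_def by blast
qed


lemma norm_blk_le: "norm (blk x k) \<le> norm (x::real^('k::finite\<times>'m::finite))"
proof -
  have "(norm (blk x k))\<^sup>2 \<le> (\<Sum>k\<in>UNIV. (norm (blk x k))\<^sup>2)" by (rule member_le_sum) auto
  then have "(norm (blk x k))\<^sup>2 \<le> (norm x)\<^sup>2" by (simp add: norm2_blk[of x])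
  then show ?thesis by (simp add: power2_le_iff_abs_le)
qed

lemma blk_cont: "continuous_on UNIV (\<lambda>x::real^('k::finite\<times>'m::finite). blk x k)"
proof -
  have "1-lipschitz_on UNIV (\<lambda>x::real^('k\<times>'m). blk x k)"
    by (rule lipschitz_onI) (auto simp: dist_norm blk_diff[symmetric] norm_blk_le)
  then show ?thesis by (rule lipschitz_on_continuous_on)
qed

lemma blk_meas: "f \<in> borel_measurable G \<Longrightarrow> (\<lambda>\<omega>. blk (f \<omega> :: real^('k::finite\<times>'m::finite)) k) \<in> borel_measurable G"
  by (rule borel_measurable_continuous_on[OF blk_cont])

lemma L2_blk: "subalgebra M G \<Longrightarrow> prob_space M \<Longrightarrow> L2 M G f \<Longrightarrow> L2 M G (\<lambda>\<omega>. blk (f \<omega> :: real^('k::finite\<times>'m::finite)) k)"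
  by (rule L2_lip[where L=1]) (auto simp: blk_diff[symmetric] norm_blk_le)

lemma L2_sum:
  assumes "subalgebra M G" "\<And>j. j \<in> A \<Longrightarrow> L2 M G (f j)" "prob_space M"
  shows "L2 M G (\<lambda>\<omega>. \<Sum>j\<in>A. f j \<omega>)"
  using assms(2)
proof (induction A rule: infinite_finite_induct)
  case (infinite A) then show ?case using L2_const[OF assms(3)] by simp
next
  case empty then show ?case using L2_const[OF assms(3)] by simp
next
  case (insert x F)
  have "L2 M G (f x)" using insert by simp
  then show ?case using L2_add[OF assms(1) _ insert.IH, of "f x"] insert by simp
qed

lemma core:
  fixes g :: "real^('k::finite\<times>'m::finite) \<Rightarrow> real^('k\<times>'m)"
    and N Ab :: "real^('k\<times>'m)^('k\<times>'m)"
    and beta sigma :: "'k \<Rightarrow> real"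
    and M :: "'w measure" and F :: "nat \<Rightarrow> 'w measure"
    and w psi s :: "nat \<Rightarrow> 'w \<Rightarrow> real^('k\<times>'m)"
  assumes symN: "dsym N" and psd: "\<And>v. 0 \<le> v \<bullet> (N *v v)"
    and cN: "\<And>v. c * (v \<bullet> (N *v v)) \<le> (norm (N *v v))\<^sup>2" and c0: "c > 0"
    and rec: "\<And>x y. Ab *v x = y \<Longrightarrow> x = y + N *v y"
    and Nws: "N *v wstar = 0" and Nq: "N *v q = g wstar"
    and contr: "\<And>x. (norm ((x - wstar) - mu *\<^sub>R (g x - g wstar)))\<^sup>2 \<le> kap * (norm (x - wstar))\<^sup>2"
    and lip: "\<And>x y. norm (g x - g y) \<le> L * norm (x - y)" and L0: "0 \<le> L"
    and bm: "\<And>k. 0 \<le> beta k \<and> beta k \<le> betam"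
    and S2: "S2 = (\<Sum>k\<in>UNIV. (sigma k)\<^sup>2)"
    and mu0: "0 < mu" and rho1: "kap + mu\<^sup>2 * betam\<^sup>2 \<le> rho" and rho2: "1 \<le> rho * (1 + c)" and rho3: "rho < 1"
    and pM: "prob_space M"
    and sub: "\<forall>i. subalgebra M (F i)"
    and filt: "\<forall>i. sets (F i) \<subseteq> sets (F (Suc i))"
    and w0m: "w 0 \<in> borel_measurable (F 0)"
    and w0i: "(\<integral>\<^sup>+ \<omega>. ennreal ((norm (w 0 \<omega>))\<^sup>2) \<partial>M) < \<infinity>"
    and sm: "\<forall>i\<ge>1. s i \<in> borel_measurable (F i)"
    and p0: "\<forall>\<omega>. psi 0 \<omega> = w 0 \<omega>"
    and pr: "\<forall>i\<ge>1. \<forall>\<omega>. psi i \<omega> = w (i - 1) \<omega> - mu *\<^sub>R (g (w (i - 1) \<omega>) + s i \<omega>)"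
    and wr: "\<forall>i\<ge>1. \<forall>\<omega>. w i \<omega> = Ab *v (w (i - 1) \<omega> + psi i \<omega> - psi (i - 1) \<omega>)"
    and ce: "\<forall>i\<ge>1. \<forall>k j. AE \<omega> in M. real_cond_exp M (F (i - 1)) (\<lambda>\<omega>. s i \<omega> $ (k, j)) \<omega> = 0"
    and nb: "\<forall>i\<ge>1. \<forall>k. AE \<omega> in M.
          nn_cond_exp M (F (i - 1)) (\<lambda>\<omega>. ennreal ((norm (blk (s i \<omega>) k))\<^sup>2)) \<omega>
            \<le> ennreal ((beta k)\<^sup>2 * (norm (blk wstar k - blk (w (i - 1) \<omega>) k))\<^sup>2 + (sigma k)\<^sup>2)"
  shows "(\<exists>B::real. \<forall>i. (\<integral>\<^sup>+ \<omega>. ennreal ((norm (wstar - w i \<omega>))\<^sup>2) \<partial>M) \<le> ennreal B) \<and>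
      limsup (\<lambda>i. \<integral>\<^sup>+ \<omega>. ennreal ((norm (wstar - w i \<omega>))\<^sup>2) \<partial>M) \<le> ennreal (mu\<^sup>2 * S2 / (1 - rho))"
proof -
  have subi: "subalgebra M (F i)" for i using sub by blast
  have sfi: "sigma_finite_subalgebra M (F i)" for i using sfs[OF pM subi] .
  have monoF: "sets (F i) \<subseteq> sets (F j)" if "i \<le> j" for i j
    using lift_Suc_mono_le[of "\<lambda>i. sets (F i)", OF _ that] filt by blast
  have L2up: "L2 M (F j) f" if "L2 M (F i) f" "i \<le> j" for f :: "'w \<Rightarrow> real^('k\<times>'m)" and i j
    using L2_mono[OF subi subi monoF[OF that(2)] that(1)] .
  have ps: "psi (Suc i) \<omega> = w i \<omega> - mu *\<^sub>R (g (w i \<omega>) + s (Suc i) \<omega>)" for i \<omega>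
    using pr[rule_format, of "Suc i"] by simp
  define z where "z i \<omega> = (\<Sum>j\<in>{1..i}. w j \<omega>)" for i \<omega>
  define e where "e i \<omega> = w i \<omega> - wstar" for i \<omega>
  define u where "u i \<omega> = z i \<omega> - real i *\<^sub>R wstar + mu *\<^sub>R q" for i \<omega>
  define d where "d i \<omega> = e i \<omega> - mu *\<^sub>R (g (w i \<omega>) - g wstar)" for i \<omega>
  define W where "W i \<omega> = (norm (e i \<omega>))\<^sup>2 + e i \<omega> \<bullet> (N *v e i \<omega>) + (1 + c) * (u i \<omega> \<bullet> (N *v u i \<omega>))" for i \<omega>
  have wrec: "w (Suc i) \<omega> = psi (Suc i) \<omega> - N *v z (Suc i) \<omega>" for i \<omega>
    unfolding z_def by (rule path_rec[OF rec p0 wr])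
  have zS: "z (Suc i) \<omega> = z i \<omega> + w (Suc i) \<omega>" for i \<omega>
    unfolding z_def by (simp add: sum.cl_ivl_Suc)
  have pe: "e (Suc i) \<omega> + N *v u (Suc i) \<omega> = d i \<omega> - mu *\<^sub>R s (Suc i) \<omega>"
    "u (Suc i) \<omega> = u i \<omega> + e (Suc i) \<omega>" for i \<omega>
    using path_err[of "\<lambda>j. w j \<omega>" i "\<lambda>j. psi j \<omega>" N "\<lambda>j. z j \<omega>" mu g "s (Suc i) \<omega>" wstar q,
        OF wrec ps zS Nws Nq]
    unfolding e_def u_def d_def by auto
  have pathW: "W (Suc i) \<omega> \<le> kap * (norm (e i \<omega>))\<^sup>2 + u i \<omega> \<bullet> (N *v u i \<omega>)
      - 2 * mu * (d i \<omega> \<bullet> s (Suc i) \<omega>) + mu\<^sup>2 * (norm (s (Suc i) \<omega>))\<^sup>2" for i \<omega>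
    unfolding W_def
    by (rule lyap_step[OF symN cN pe(1) pe(2)]) (use contr[of "w i \<omega>"] in \<open>simp add: d_def e_def\<close>)
  have cst: "L2 M G (\<lambda>\<omega>. v)" for G and v :: "real^('k\<times>'m)" by (rule L2_const[OF pM])
  have noise: "L2 M (F (Suc i)) (s (Suc i)) \<and>
      integral\<^sup>L M (\<lambda>\<omega>. (norm (s (Suc i) \<omega>))\<^sup>2) \<le> betam\<^sup>2 * integral\<^sup>L M (\<lambda>\<omega>. (norm (e i \<omega>))\<^sup>2) + S2"
    if Lw: "L2 M (F i) (w i)" for i
  proof -
    have Le: "L2 M (F i) (e i)" unfolding e_def by (rule L2_diff[OF subi Lw cst])
    have smS[measurable]: "s (Suc i) \<in> borel_measurable (F (Suc i))" using sm by auto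
    have smM[measurable]: "s (Suc i) \<in> borel_measurable M" using measurable_from_subalg[OF subi smS] .
    define h where "h k \<omega> = (norm (blk (s (Suc i) \<omega>) k))\<^sup>2" for k \<omega>
    define b where "b k \<omega> = (beta k)\<^sup>2 * (norm (blk (e i \<omega>) k))\<^sup>2 + (sigma k)\<^sup>2" for k \<omega>
    have hm: "h k \<in> borel_measurable M" for k
    proof -
      have "(\<lambda>\<omega>. blk (s (Suc i) \<omega>) k) \<in> borel_measurable M" by (rule blk_meas[OF smM])
      then show ?thesis unfolding h_def by measurable
    qed
    have Lbe: "L2 M (F i) (\<lambda>\<omega>. blk (e i \<omega>) k)" for k by (rule L2_blk[OF subi pM Le])
    have bi: "integrable M (b k)" for k
      unfolding b_def using Lbe[of k] pM by (auto simp: L2_def prob_space_def intro!: finite_measure.integrable_const)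
    have nbk: "AE \<omega> in M. nn_cond_exp M (F i) (\<lambda>\<omega>. ennreal (h k \<omega>)) \<omega> \<le> ennreal (b k \<omega>)" for k
    proof -
      have "blk wstar k - blk (w i \<omega>) k = - blk (e i \<omega>) k" for \<omega> by (simp add: e_def blk_diff)
      then show ?thesis using nb[rule_format, of "Suc i" k] unfolding h_def b_def by simp
    qed
    have hb: "integrable M (h k) \<and> integral\<^sup>L M (h k) \<le> integral\<^sup>L M (b k)" for k
    proof -
      have h0: "\<And>\<omega>. 0 \<le> h k \<omega>" by (simp add: h_def)
      have b0: "\<And>\<omega>. 0 \<le> b k \<omega>" by (simp add: b_def)
      show ?thesis using noise_bound[OF sfi hm h0 nbk bi b0] by blast
    qed
    have ns: "(norm (s (Suc i) \<omega>))\<^sup>2 = (\<Sum>k\<in>UNIV. h k \<omega>)" for \<omega> unfolding h_def by (rule norm2_blk)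
    have si: "integrable M (\<lambda>\<omega>. (norm (s (Suc i) \<omega>))\<^sup>2)" unfolding ns using hb by auto
    have "integral\<^sup>L M (\<lambda>\<omega>. (norm (s (Suc i) \<omega>))\<^sup>2) = (\<Sum>k\<in>UNIV. integral\<^sup>L M (h k))"
      unfolding ns using hb by (intro Bochner_Integration.integral_sum) auto
    also have "\<dots> \<le> (\<Sum>k\<in>UNIV. integral\<^sup>L M (b k))" using hb by (intro sum_mono) auto
    also have "\<dots> = integral\<^sup>L M (\<lambda>\<omega>. \<Sum>k\<in>UNIV. b k \<omega>)" using bi by (intro Bochner_Integration.integral_sum[symmetric]) auto
    also have "\<dots> \<le> integral\<^sup>L M (\<lambda>\<omega>. betam\<^sup>2 * (norm (e i \<omega>))\<^sup>2 + S2)"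
    proof (rule integral_mono)
      show "integrable M (\<lambda>\<omega>. \<Sum>k\<in>UNIV. b k \<omega>)" using bi by auto
      show "integrable M (\<lambda>\<omega>. betam\<^sup>2 * (norm (e i \<omega>))\<^sup>2 + S2)"
        using Le pM by (auto simp: L2_def prob_space_def intro!: finite_measure.integrable_const)
      fix \<omega>
      have "(\<Sum>k\<in>UNIV. b k \<omega>) = (\<Sum>k\<in>UNIV. (beta k)\<^sup>2 * (norm (blk (e i \<omega>) k))\<^sup>2) + S2"
        unfolding b_def S2 by (simp add: sum.distrib)
      also have "(\<Sum>k\<in>UNIV. (beta k)\<^sup>2 * (norm (blk (e i \<omega>) k))\<^sup>2) \<le> (\<Sum>k\<in>UNIV. betam\<^sup>2 * (norm (blk (e i \<omega>) k))\<^sup>2)"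
        using bm by (intro sum_mono mult_right_mono power_mono) auto
      also have "\<dots> = betam\<^sup>2 * (norm (e i \<omega>))\<^sup>2" by (simp add: norm2_blk[of "e i \<omega>"] sum_distrib_left)
      finally show "(\<Sum>k\<in>UNIV. b k \<omega>) \<le> betam\<^sup>2 * (norm (e i \<omega>))\<^sup>2 + S2" by simp
    qed
    also have "\<dots> = betam\<^sup>2 * integral\<^sup>L M (\<lambda>\<omega>. (norm (e i \<omega>))\<^sup>2) + S2"
    proof -
      have ie: "integrable M (\<lambda>\<omega>. betam\<^sup>2 * (norm (e i \<omega>))\<^sup>2)" using Le by (auto simp: L2_def)
      have ic: "integrable M (\<lambda>\<omega>. S2)" using pM by (auto simp: prob_space_def intro!: finite_measure.integrable_const)
      have "integral\<^sup>L M (\<lambda>\<omega>. betam\<^sup>2 * (norm (e i \<omega>))\<^sup>2 + S2) = integral\<^sup>L M (\<lambda>\<omega>. betam\<^sup>2 * (norm (e i \<omega>))\<^sup>2) + integral\<^sup>L M (\<lambda>\<omega>. S2)"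
        by (rule Bochner_Integration.integral_add[OF ie ic])
      also have "integral\<^sup>L M (\<lambda>\<omega>. S2) = S2" using prob_space.prob_space[OF pM] by simp
      finally show ?thesis by simp
    qed
    finally show ?thesis using si smS unfolding L2_def by simp
  qed
  have L2all: "L2 M (F i) (w i) \<and> L2 M (F i) (psi i) \<and> L2 M (F i) (z i)" for i
  proof (induction i)
    case 0
    have w0: "L2 M (F 0) (w 0)"
    proof -
      have [measurable]: "w 0 \<in> borel_measurable M" using measurable_from_subalg[OF subi w0m] .
      have "integrable M (\<lambda>\<omega>. (norm (w 0 \<omega>))\<^sup>2)"
        by (rule integrableI_bounded) (use w0i in auto)
      then show ?thesis using w0m by (simp add: L2_def)
    qed
    moreover have "psi 0 = w 0" using p0 by (simp add: fun_eq_iff)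
    moreover have "z 0 = (\<lambda>\<omega>. 0)" by (simp add: z_def fun_eq_iff)
    ultimately show ?case using cst by simp
  next
    case (Suc i)
    have Lw: "L2 M (F i) (w i)" and Lp: "L2 M (F i) (psi i)" and Lz: "L2 M (F i) (z i)" using Suc by auto
    have Ls: "L2 M (F (Suc i)) (s (Suc i))" using noise[OF Lw] by blast
    have Lw': "L2 M (F (Suc i)) (w i)" using L2up[OF Lw] by simp
    have Lp': "L2 M (F (Suc i)) (psi i)" using L2up[OF Lp] by simp
    have Lz': "L2 M (F (Suc i)) (z i)" using L2up[OF Lz] by simp
    have Lg: "L2 M (F (Suc i)) (\<lambda>\<omega>. g (w i \<omega>))" by (rule L2_lip[OF subi pM Lw' lip L0])
    have pe: "psi (Suc i) = (\<lambda>\<omega>. w i \<omega> - mu *\<^sub>R (g (w i \<omega>) + s (Suc i) \<omega>))" using ps by (simp add: fun_eq_iff)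
    have LpS: "L2 M (F (Suc i)) (psi (Suc i))"
      unfolding pe by (intro L2_diff[OF subi] Lw' L2_scale L2_add[OF subi] Lg Ls)
    have we: "w (Suc i) = (\<lambda>\<omega>. Ab *v (w i \<omega> + psi (Suc i) \<omega> - psi i \<omega>))"
      using wr[rule_format, of "Suc i"] by (simp add: fun_eq_iff)
    have LwS: "L2 M (F (Suc i)) (w (Suc i))"
      unfolding we by (intro L2_mat[OF subi pM] L2_diff[OF subi] L2_add[OF subi] Lw' LpS Lp')
    have ze: "z (Suc i) = (\<lambda>\<omega>. z i \<omega> + w (Suc i) \<omega>)" using zS by (simp add: fun_eq_iff)
    have LzS: "L2 M (F (Suc i)) (z (Suc i))" unfolding ze by (intro L2_add[OF subi] Lz' LwS)
    show ?case using LwS LpS LzS by blast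
  qed
  have rho0: "0 \<le> rho" using rho2 c0 by (smt (verit) mult_nonpos_nonneg)
  have Le: "L2 M (F i) (e i)" for i unfolding e_def using L2all[of i] by (intro L2_diff[OF subi] cst) auto
  have Lu: "L2 M (F i) (u i)" for i unfolding u_def using L2all[of i]
    by (intro L2_add[OF subi] L2_diff[OF subi] cst) auto
  have Ld: "L2 M (F i) (d i)" for i unfolding d_def
    using L2all[of i] Le[of i] by (intro L2_diff[OF subi] L2_scale L2_lip[OF subi pM _ lip L0] cst) auto
  have LNe: "L2 M (F i) (\<lambda>\<omega>. N *v e i \<omega>)" for i by (rule L2_mat[OF subi pM Le])
  have LNu: "L2 M (F i) (\<lambda>\<omega>. N *v u i \<omega>)" for i by (rule L2_mat[OF subi pM Lu])
  have Ls: "L2 M (F (Suc i)) (s (Suc i))" for i using noise L2all by blast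
  have iE: "integrable M (\<lambda>\<omega>. (norm (e i \<omega>))\<^sup>2)" for i using Le L2_int by blast
  have iN: "integrable M (\<lambda>\<omega>. e i \<omega> \<bullet> (N *v e i \<omega>))" for i by (rule L2_inner[OF subi subi Le LNe])
  have iQ: "integrable M (\<lambda>\<omega>. u i \<omega> \<bullet> (N *v u i \<omega>))" for i by (rule L2_inner[OF subi subi Lu LNu])
  have iS: "integrable M (\<lambda>\<omega>. (norm (s (Suc i) \<omega>))\<^sup>2)" for i using Ls L2_int by blast
  have iDS: "integrable M (\<lambda>\<omega>. d i \<omega> \<bullet> s (Suc i) \<omega>)" for i by (rule L2_inner[OF subi subi Ld Ls])
  define Ee where "Ee i = integral\<^sup>L M (\<lambda>\<omega>. (norm (e i \<omega>))\<^sup>2)" for i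
  define EN where "EN i = integral\<^sup>L M (\<lambda>\<omega>. e i \<omega> \<bullet> (N *v e i \<omega>))" for i
  define EQ where "EQ i = integral\<^sup>L M (\<lambda>\<omega>. u i \<omega> \<bullet> (N *v u i \<omega>))" for i
  define EW where "EW i = integral\<^sup>L M (W i)" for i
  have iW: "integrable M (W i)" for i unfolding W_def using iE iN iQ by auto
  have EWeq: "EW i = Ee i + EN i + (1 + c) * EQ i" for i
    unfolding EW_def W_def Ee_def EN_def EQ_def using iE iN iQ by simp
  have Ee0: "0 \<le> Ee i" for i unfolding Ee_def by (intro integral_nonneg_AE) auto
  have EN0: "0 \<le> EN i" for i unfolding EN_def using psd by (intro integral_nonneg_AE) auto
  have EQ0: "0 \<le> EQ i" for i unfolding EQ_def using psd by (intro integral_nonneg_AE) auto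
  have EDS: "integral\<^sup>L M (\<lambda>\<omega>. d i \<omega> \<bullet> s (Suc i) \<omega>) = 0" for i
  proof -
    have "integral\<^sup>L M (\<lambda>\<omega>. d i \<omega> \<bullet> s (Suc i) \<omega>) = integral\<^sup>L M (\<lambda>\<omega>. \<Sum>x\<in>UNIV. d i \<omega> $ x * s (Suc i) \<omega> $ x)"
      by (simp add: inner_vec_def)
    also have "\<dots> = (\<Sum>x\<in>UNIV. integral\<^sup>L M (\<lambda>\<omega>. d i \<omega> $ x * s (Suc i) \<omega> $ x))"
      by (intro Bochner_Integration.integral_sum L2_comp_prod[OF subi subi Ld Ls])
    also have "\<dots> = 0"
    proof (intro sum.neutral ballI)
      fix x :: "'k \<times> 'm"
      obtain k j where x: "x = (k, j)" by (cases x)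
      have dm: "d i \<in> borel_measurable (F i)" using Ld by (simp add: L2_def)
      have sM: "s (Suc i) \<in> borel_measurable M" using L2_M[OF subi Ls] .
      show "integral\<^sup>L M (\<lambda>\<omega>. d i \<omega> $ x * s (Suc i) \<omega> $ x) = 0"
      proof (rule orth[OF sfi])
        show "(\<lambda>\<omega>. d i \<omega> $ x) \<in> borel_measurable (F i)"
          using measurable_compose[OF dm borel_measurable_nth] by simp
        show "(\<lambda>\<omega>. s (Suc i) \<omega> $ x) \<in> borel_measurable M"
          using measurable_compose[OF sM borel_measurable_nth] by simp
        show "integrable M (\<lambda>\<omega>. d i \<omega> $ x * s (Suc i) \<omega> $ x)" by (rule L2_comp_prod[OF subi subi Ld Ls])
        show "AE \<omega> in M. real_cond_exp M (F i) (\<lambda>\<omega>. s (Suc i) \<omega> $ x) \<omega> = 0"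
          using ce[rule_format, of "Suc i" k j] x by simp
      qed
    qed
    finally show ?thesis .
  qed
  have step: "EW (Suc i) \<le> rho * EW i + mu\<^sup>2 * S2" for i
  proof -
    define R where "R \<omega> = kap * (norm (e i \<omega>))\<^sup>2 + u i \<omega> \<bullet> (N *v u i \<omega>)
      - 2 * mu * (d i \<omega> \<bullet> s (Suc i) \<omega>) + mu\<^sup>2 * (norm (s (Suc i) \<omega>))\<^sup>2" for \<omega>
    have iR: "integrable M R" unfolding R_def using iE iQ iDS iS by auto
    have "EW (Suc i) \<le> integral\<^sup>L M R" unfolding EW_def
      by (rule integral_mono[OF iW iR]) (simp add: R_def pathW)
    also have "integral\<^sup>L M R = kap * Ee i + EQ i - 2 * mu * integral\<^sup>L M (\<lambda>\<omega>. d i \<omega> \<bullet> s (Suc i) \<omega>)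
        + mu\<^sup>2 * integral\<^sup>L M (\<lambda>\<omega>. (norm (s (Suc i) \<omega>))\<^sup>2)"
      unfolding R_def Ee_def EQ_def using iE iQ iDS iS by simp
    also have "\<dots> \<le> kap * Ee i + EQ i + mu\<^sup>2 * (betam\<^sup>2 * Ee i + S2)"
      using noise[OF conjunct1[OF L2all[of i]]] EDS[of i] unfolding Ee_def
      by (simp add: mult_left_mono)
    also have "\<dots> = (kap + mu\<^sup>2 * betam\<^sup>2) * Ee i + EQ i + mu\<^sup>2 * S2" by (simp add: algebra_simps)
    also have "\<dots> \<le> rho * EW i + mu\<^sup>2 * S2"
    proof -
      have "(kap + mu\<^sup>2 * betam\<^sup>2) * Ee i \<le> rho * Ee i" using rho1 Ee0 by (intro mult_right_mono) auto
      moreover have "1 * EQ i \<le> (rho * (1 + c)) * EQ i" using rho2 EQ0 by (intro mult_right_mono) auto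
      moreover have "0 \<le> rho * EN i" using rho0 EN0 by simp
      ultimately show ?thesis unfolding EWeq by (simp add: algebra_simps)
    qed
    finally show ?thesis .
  qed
  have xa: "Ee i \<le> EW i" for i unfolding EWeq using EN0[of i] EQ0[of i] c0 by simp
  have S20: "0 \<le> S2" unfolding S2 by (intro sum_nonneg) auto
  have nn: "(\<integral>\<^sup>+ \<omega>. ennreal ((norm (wstar - w i \<omega>))\<^sup>2) \<partial>M) = ennreal (Ee i)" for i
  proof -
    have "(\<integral>\<^sup>+ \<omega>. ennreal ((norm (wstar - w i \<omega>))\<^sup>2) \<partial>M) = (\<integral>\<^sup>+ \<omega>. ennreal ((norm (e i \<omega>))\<^sup>2) \<partial>M)"
      by (simp add: e_def norm_minus_commute)
    also have "\<dots> = ennreal (Ee i)" unfolding Ee_def by (rule nn_integral_eq_integral) (use iE in auto)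
    finally show ?thesis .
  qed
  have "(\<exists>B. \<forall>i. ennreal (Ee i) \<le> ennreal B) \<and> limsup (\<lambda>i. ennreal (Ee i)) \<le> ennreal (mu\<^sup>2 * S2 / (1 - rho))"
    by (rule seq_final[of EW rho "mu\<^sup>2 * S2" Ee, OF step rho0 rho3 xa]) (use S20 in simp)
  then show ?thesis unfolding nn by simp
qed


theorem mainTheorem1:
  fixes J :: "'k::finite \<Rightarrow> real^'m::finite \<Rightarrow> real"
    and gradJ :: "'k \<Rightarrow> real^'m \<Rightarrow> real^'m"
    and nu delta beta sigma :: "'k \<Rightarrow> real"
    and U :: "real^'p::finite^('k \<times> 'm)"
    and A :: "real^('k \<times> 'm)^('k \<times> 'm)"
    and wstar :: "real^('k \<times> 'm)"
  assumes grad: "\<And>k x. (J k has_derivative (\<lambda>h. gradJ k x \<bullet> h)) (at x)"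
    and A1_const: "\<And>k. 0 < nu k \<and> nu k < delta k"
    and A1_strong: "\<And>k x y. (gradJ k x - gradJ k y) \<bullet> (x - y) \<ge> nu k * (norm (x - y))\<^sup>2"
    and A1_lip: "\<And>k x y. norm (gradJ k x - gradJ k y) \<le> delta k * norm (x - y)"
    and A2_const: "\<And>k. beta k \<ge> 0 \<and> sigma k \<ge> 0"
    and U_rank: "rank U = CARD('p)"
    and wstar_in: "wstar \<in> range (\<lambda>x. U *v x)"
    and wstar_min: "\<And>w. w \<in> range (\<lambda>x. U *v x) \<Longrightarrow>
                      (\<Sum>k\<in>UNIV. J k (blk wstar k)) \<le> (\<Sum>k\<in>UNIV. J k (blk w k))"
    and A_sym: "transpose A = A"
    and A_P: "A ** proj_range U = proj_range U"
    and P_A: "proj_range U ** A = proj_range U"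
    and A_rho: "spec_radius (proj_range U - A) < 1"
  shows "\<exists>mubar>0. \<exists>C::real. \<forall>mu. 0 < mu \<and> mu < mubar \<longrightarrow>
    (\<forall>(M :: 'w measure) (F :: nat \<Rightarrow> 'w measure)
       (w :: nat \<Rightarrow> 'w \<Rightarrow> real^('k \<times> 'm)) (psi :: nat \<Rightarrow> 'w \<Rightarrow> real^('k \<times> 'm))
       (s :: nat \<Rightarrow> 'w \<Rightarrow> real^('k \<times> 'm)).
      prob_space M \<and>
      (\<forall>i. subalgebra M (F i)) \<and>
      (\<forall>i. sets (F i) \<subseteq> sets (F (Suc i))) \<and>
      w 0 \<in> borel_measurable (F 0) \<and>
      (\<integral>\<^sup>+ \<omega>. ennreal ((norm (w 0 \<omega>))\<^sup>2) \<partial>M) < \<infinity> \<and>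
      (\<forall>i\<ge>1. s i \<in> borel_measurable (F i)) \<and>
      (\<forall>\<omega>. psi 0 \<omega> = w 0 \<omega>) \<and>
      (\<forall>i\<ge>1. \<forall>\<omega>. psi i \<omega> = w (i - 1) \<omega> - mu *\<^sub>R (netgrad gradJ (w (i - 1) \<omega>) + s i \<omega>)) \<and>
      (\<forall>i\<ge>1. \<forall>\<omega>. w i \<omega> = ((1/2) *\<^sub>R (mat 1 + A)) *v (w (i - 1) \<omega> + psi i \<omega> - psi (i - 1) \<omega>)) \<and>
      (\<forall>i\<ge>1. \<forall>k j. AE \<omega> in M. real_cond_exp M (F (i - 1)) (\<lambda>\<omega>. s i \<omega> $ (k, j)) \<omega> = 0) \<and>
      (\<forall>i\<ge>1. \<forall>k. AE \<omega> in M.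
          nn_cond_exp M (F (i - 1)) (\<lambda>\<omega>. ennreal ((norm (blk (s i \<omega>) k))\<^sup>2)) \<omega>
            \<le> ennreal ((beta k)\<^sup>2 * (norm (blk wstar k - blk (w (i - 1) \<omega>) k))\<^sup>2 + (sigma k)\<^sup>2)) \<and>
      (\<forall>i\<ge>1. \<forall>k l j j'. k \<noteq> l \<longrightarrow> (AE \<omega> in M.
          real_cond_exp M (F (i - 1)) (\<lambda>\<omega>. s i \<omega> $ (k, j) * s i \<omega> $ (l, j')) \<omega> = 0))
      \<longrightarrow>
      (\<exists>B::real. \<forall>i. (\<integral>\<^sup>+ \<omega>. ennreal ((norm (wstar - w i \<omega>))\<^sup>2) \<partial>M) \<le> ennreal B) \<and>
      limsup (\<lambda>i. \<integral>\<^sup>+ \<omega>. ennreal ((norm (wstar - w i \<omega>))\<^sup>2) \<partial>M) \<le> ennreal (C * mu))"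
proof -
  define P where "P = proj_range U"
  have symP: "dsym P" unfolding P_def by (rule proj_props(1)[OF U_rank])
  have PP: "\<And>x. P *v (P *v x) = P *v x" unfolding P_def by (rule proj_props(2)[OF U_rank])
  have PU: "\<And>x. P *v (U *v x) = U *v x" unfolding P_def by (rule proj_props(3)[OF U_rank])
  have Pg: "\<And>g. transpose U *v g = 0 \<Longrightarrow> P *v g = 0" unfolding P_def by (rule proj_props(4)[OF U_rank])
  have symA: "dsym A" by (rule dsym_transpose[OF A_sym])
  have AP: "A *v (P *v x) = P *v x" for x using A_P unfolding P_def by (simp add: matrix_vector_mul_assoc)
  have PA: "P *v (A *v x) = P *v x" for x using P_A unfolding P_def by (simp add: matrix_vector_mul_assoc)
  have symB: "dsym (P - A)" using symP symA unfolding dsym_def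
    by (simp add: matrix_vector_mult_diff_rdistrib inner_diff_left inner_diff_right)
  obtain r where r0: "0 \<le> r" and r1: "r < 1" and rB: "\<And>v. norm ((P - A) *v v) \<le> r * norm v"
    using spec_bound[OF symB] A_rho unfolding P_def by blast
  obtain N c where NC: "c > 0 \<and> dsym N \<and> (\<forall>v. 0 \<le> v \<bullet> (N *v v)) \<and> (\<forall>v. c * (v \<bullet> (N *v v)) \<le> (norm (N *v v))\<^sup>2)
     \<and> (\<forall>x y. ((1/2) *\<^sub>R (mat 1 + A)) *v x = y \<longrightarrow> x = y + N *v y)
     \<and> (\<forall>x. P *v x = x \<longrightarrow> N *v x = 0) \<and> (\<forall>g. P *v g = 0 \<longrightarrow> (\<exists>q. N *v q = g))"
    using N_exists[OF symA symP PP AP PA r0 r1 rB] by (elim exE) (erule that)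
  note c0 = NC[THEN conjunct1]
  note symN = NC[THEN conjunct2, THEN conjunct1]
  note psd = NC[THEN conjunct2, THEN conjunct2, THEN conjunct1, rule_format]
  note cN = NC[THEN conjunct2, THEN conjunct2, THEN conjunct2, THEN conjunct1, rule_format]
  note rec = NC[THEN conjunct2, THEN conjunct2, THEN conjunct2, THEN conjunct2, THEN conjunct1, rule_format]
  note null = NC[THEN conjunct2, THEN conjunct2, THEN conjunct2, THEN conjunct2, THEN conjunct2, THEN conjunct1, rule_format]
  note rng = NC[THEN conjunct2, THEN conjunct2, THEN conjunct2, THEN conjunct2, THEN conjunct2, THEN conjunct2, rule_format]
  define g where "g = netgrad gradJ"
  have kk: "transpose U *v g wstar = 0" unfolding g_def by (rule kkt[OF grad wstar_in wstar_min])
  obtain q where Nq: "N *v q = g wstar" using rng[OF Pg[OF kk]] by blast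
  obtain x0 where x0: "wstar = U *v x0" using wstar_in by blast
  have "P *v wstar = wstar" unfolding x0 by (rule PU)
  then have Nws: "N *v wstar = 0" by (rule null)
  define nu0 where "nu0 = Min (range nu)"
  define delta0 where "delta0 = Max (range delta)"
  define betam where "betam = Max (range beta)"
  define S2 where "S2 = (\<Sum>k\<in>UNIV. (sigma k)\<^sup>2)"
  have nu0k: "nu0 \<le> nu k" for k unfolding nu0_def by (rule Min_le) auto
  have "nu0 \<in> range nu" unfolding nu0_def by (rule Min_in) auto
  then obtain k0 where "nu0 = nu k0" by blast
  then have nu0p: "nu0 > 0" using A1_const[of k0] by simp
  have de: "0 \<le> delta k \<and> delta k \<le> delta0" for k
    using A1_const[of k] unfolding delta0_def by (auto intro: Max_ge)
  have bm: "0 \<le> beta k \<and> beta k \<le> betam" for k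
    using A2_const[of k] unfolding betam_def by (auto intro: Max_ge)
  have d00: "0 \<le> delta0" using de[of undefined] by simp
  have glip: "norm (g x - g y) \<le> delta0 * norm (x - y)" for x y
  proof -
    have "(norm (g x - g y))\<^sup>2 = (\<Sum>k\<in>UNIV. (norm (gradJ k (blk x k) - gradJ k (blk y k)))\<^sup>2)"
      unfolding g_def by (simp add: norm2_blk[of "netgrad gradJ x - netgrad gradJ y"] blk_diff blk_netgrad)
    also have "\<dots> \<le> (\<Sum>k\<in>UNIV. delta0\<^sup>2 * (norm (blk (x - y) k))\<^sup>2)"
    proof (rule sum_mono)
      fix k
      have "norm (gradJ k (blk x k) - gradJ k (blk y k)) \<le> delta k * norm (blk x k - blk y k)" by (rule A1_lip)
      also have "\<dots> \<le> delta0 * norm (blk (x - y) k)" using de[of k] by (simp add: blk_diff mult_right_mono)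
      finally have "norm (gradJ k (blk x k) - gradJ k (blk y k)) \<le> delta0 * norm (blk (x - y) k)" .
      then have "(norm (gradJ k (blk x k) - gradJ k (blk y k)))\<^sup>2 \<le> (delta0 * norm (blk (x - y) k))\<^sup>2"
        by (intro power_mono) auto
      then show "(norm (gradJ k (blk x k) - gradJ k (blk y k)))\<^sup>2 \<le> delta0\<^sup>2 * (norm (blk (x - y) k))\<^sup>2"
        by (simp add: power_mult_distrib)
    qed
    also have "\<dots> = (delta0 * norm (x - y))\<^sup>2"
      by (simp add: norm2_blk[of "x - y"] sum_distrib_left power_mult_distrib)
    finally show ?thesis using d00 by (simp add: power2_le_iff_abs_le)
  qed
  define mubar where "mubar = min (nu0 / (delta0\<^sup>2 + betam\<^sup>2 + 1)) (c / ((1 + c) * nu0))"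
  have Dp: "0 < delta0\<^sup>2 + betam\<^sup>2 + 1" by (intro add_nonneg_pos add_nonneg_nonneg zero_le_power2) simp
  have Cp: "0 < (1 + c) * nu0" using c0 nu0p by simp
  have mubar0: "mubar > 0" unfolding mubar_def using nu0p c0 Dp Cp by simp
  show ?thesis
  proof (rule exI[of _ mubar], rule conjI[OF mubar0], rule exI[of _ "S2 / nu0"], intro allI impI)
    fix mu :: real and M :: "'w measure" and F w psi s
    assume mu: "0 < mu \<and> mu < mubar"
    assume H: "prob_space M \<and>
      (\<forall>i. subalgebra M (F i)) \<and>
      (\<forall>i. sets (F i) \<subseteq> sets (F (Suc i))) \<and>
      w 0 \<in> borel_measurable (F 0) \<and>
      (\<integral>\<^sup>+ \<omega>. ennreal ((norm (w 0 \<omega>))\<^sup>2) \<partial>M) < \<infinity> \<and>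
      (\<forall>i\<ge>1. s i \<in> borel_measurable (F i)) \<and>
      (\<forall>\<omega>. psi 0 \<omega> = w 0 \<omega>) \<and>
      (\<forall>i\<ge>1. \<forall>\<omega>. psi i \<omega> = w (i - 1) \<omega> - mu *\<^sub>R (netgrad gradJ (w (i - 1) \<omega>) + s i \<omega>)) \<and>
      (\<forall>i\<ge>1. \<forall>\<omega>. w i \<omega> = ((1/2) *\<^sub>R (mat 1 + A)) *v (w (i - 1) \<omega> + psi i \<omega> - psi (i - 1) \<omega>)) \<and>
      (\<forall>i\<ge>1. \<forall>k j. AE \<omega> in M. real_cond_exp M (F (i - 1)) (\<lambda>\<omega>. s i \<omega> $ (k, j)) \<omega> = 0) \<and>
      (\<forall>i\<ge>1. \<forall>k. AE \<omega> in M.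
          nn_cond_exp M (F (i - 1)) (\<lambda>\<omega>. ennreal ((norm (blk (s i \<omega>) k))\<^sup>2)) \<omega>
            \<le> ennreal ((beta k)\<^sup>2 * (norm (blk wstar k - blk (w (i - 1) \<omega>) k))\<^sup>2 + (sigma k)\<^sup>2)) \<and>
      (\<forall>i\<ge>1. \<forall>k l j j'. k \<noteq> l \<longrightarrow> (AE \<omega> in M.
          real_cond_exp M (F (i - 1)) (\<lambda>\<omega>. s i \<omega> $ (k, j) * s i \<omega> $ (l, j')) \<omega> = 0))"
    define rho where "rho = 1 - mu * nu0"
    define kap where "kap = 1 - 2 * mu * nu0 + mu\<^sup>2 * delta0\<^sup>2"
    have mu0: "0 < mu" using mu by simp
    have "mu < nu0 / (delta0\<^sup>2 + betam\<^sup>2 + 1)" using mu unfolding mubar_def by simp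
    then have m1: "mu * (delta0\<^sup>2 + betam\<^sup>2 + 1) < nu0" using Dp by (simp add: pos_less_divide_eq)
    have "mu < c / ((1 + c) * nu0)" using mu unfolding mubar_def by simp
    then have m2: "mu * ((1 + c) * nu0) < c" using Cp by (simp add: pos_less_divide_eq)
    have rho1: "kap + mu\<^sup>2 * betam\<^sup>2 \<le> rho"
    proof -
      have "mu * (mu * (delta0\<^sup>2 + betam\<^sup>2)) \<le> mu * nu0" using m1 mu0
        by (intro mult_left_mono) (auto simp: algebra_simps)
      then show ?thesis unfolding kap_def rho_def by (simp add: power2_eq_square algebra_simps)
    qed
    have rho2: "1 \<le> rho * (1 + c)" using m2 unfolding rho_def by (simp add: algebra_simps)
    have rho3: "rho < 1" unfolding rho_def using mu0 nu0p by simp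
    have contr: "(norm ((x - wstar) - mu *\<^sub>R (g x - g wstar)))\<^sup>2 \<le> kap * (norm (x - wstar))\<^sup>2" for x
      unfolding g_def kap_def
      by (rule grad_contract[OF A1_strong A1_lip nu0k de]) (use mu0 in simp)
    note H1 = H[THEN conjunct1]
    note H2 = H[THEN conjunct2, THEN conjunct1]
    note H3 = H[THEN conjunct2, THEN conjunct2, THEN conjunct1]
    note H4 = H[THEN conjunct2, THEN conjunct2, THEN conjunct2, THEN conjunct1]
    note H5 = H[THEN conjunct2, THEN conjunct2, THEN conjunct2, THEN conjunct2, THEN conjunct1]
    note H6 = H[THEN conjunct2, THEN conjunct2, THEN conjunct2, THEN conjunct2, THEN conjunct2, THEN conjunct1]
    note H7 = H[THEN conjunct2, THEN conjunct2, THEN conjunct2, THEN conjunct2, THEN conjunct2, THEN conjunct2, THEN conjunct1]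
    note H8 = H[THEN conjunct2, THEN conjunct2, THEN conjunct2, THEN conjunct2, THEN conjunct2, THEN conjunct2, THEN conjunct2, THEN conjunct1]
    note H9 = H[THEN conjunct2, THEN conjunct2, THEN conjunct2, THEN conjunct2, THEN conjunct2, THEN conjunct2, THEN conjunct2, THEN conjunct2, THEN conjunct1]
    note H10 = H[THEN conjunct2, THEN conjunct2, THEN conjunct2, THEN conjunct2, THEN conjunct2, THEN conjunct2, THEN conjunct2, THEN conjunct2, THEN conjunct2, THEN conjunct1]
    note H11 = H[THEN conjunct2, THEN conjunct2, THEN conjunct2, THEN conjunct2, THEN conjunct2, THEN conjunct2, THEN conjunct2, THEN conjunct2, THEN conjunct2, THEN conjunct2, THEN conjunct1]
    have H': "\<forall>i\<ge>1. \<forall>\<omega>. psi i \<omega> = w (i - 1) \<omega> - mu *\<^sub>R (g (w (i - 1) \<omega>) + s i \<omega>)"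
      using H8 unfolding g_def .
    have res: "(\<exists>B::real. \<forall>i. (\<integral>\<^sup>+ \<omega>. ennreal ((norm (wstar - w i \<omega>))\<^sup>2) \<partial>M) \<le> ennreal B) \<and>
      limsup (\<lambda>i. \<integral>\<^sup>+ \<omega>. ennreal ((norm (wstar - w i \<omega>))\<^sup>2) \<partial>M) \<le> ennreal (mu\<^sup>2 * S2 / (1 - rho))"
      by (rule core[OF symN psd cN c0 rec Nws Nq contr glip d00 bm S2_def mu0 rho1 rho2 rho3
            H1 H2 H3 H4 H5 H6 H7 H' H9 H10 H11])
    have "mu\<^sup>2 * S2 / (1 - rho) = S2 / nu0 * mu" unfolding rho_def using mu0 nu0p
      by (simp add: power2_eq_square field_simps)
    then show "(\<exists>B::real. \<forall>i. (\<integral>\<^sup>+ \<omega>. ennreal ((norm (wstar - w i \<omega>))\<^sup>2) \<partial>M) \<le> ennreal B) \<and>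
      limsup (\<lambda>i. \<integral>\<^sup>+ \<omega>. ennreal ((norm (wstar - w i \<omega>))\<^sup>2) \<partial>M) \<le> ennreal (S2 / nu0 * mu)"
      using res by simp
  qed
qed


end
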